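(* Let $A:\mathbb{R}\to\mathbb{R}^{n\times n}$ be continuous and bounded, and suppose the linear system $x'=A(t)x$ admits an algebraic dichotomy with respect to a growth rate $\mu$, with projections $P(s)$, $Q(s)=I-P(s)$ and constants $K>0$, $\alpha>0$. Let $f:\mathbb{R}\times\mathbb{R}^n\to\mathbb{R}^n$ be continuous and suppose there are constants $\beta,\gamma\ge 0$ such that for all $t\in\mathbb{R}$ and $x,x_1,x_2\in\mathbb{R}^n$, $$\|f(t,x)\|\le \beta\,\mu'(t)\mu^{-1}(t),\qquad \|f(t,x_1)-f(t,x_2)\|\le \gamma\,\mu'(t)\mu^{-1}(t)\,\|x_1-x_2\|,$$ and $6K\gamma\alpha^{-1}<1$. Then the nonlinear system $x'=A(t)x+f(t,x)$ is topologically conjugated to the linear system $x'=A(t)x$; that is, there is a map $H:\mathbb{R}\times\mathbb{R}^n\to\mathbb{R}^n$ such that: (i) for each fixed $t$, $H(t,\cdot)$ is a homeomorphism of $\mathbb{R}^n$ onto $\mathbb{R}^n$; (ii) $\|H(t,x)-x\|\le 2K\beta\alpha^{-1}$ for all $t\in\mathbb{R}$, $x\in\mathbb{R}^n$; (iii) $G(t,\cdot):=H^{-1}(t,\cdot)$ satisfies $\|G(t,y)-y\|\le 2K\beta\alpha^{-1}$ for all $t\in\mathbb{R}$, $y\in\mathbb{R}^n$; (iv) if $x(t)$ is a solution of $x'=A(t)x+f(t,x)$ then $H(t,x(t))$ is a solution of $x'=A(t)x$, and if $y(t)$ is a solution of $x'=A(t)x$ then $G(t,y(t))$ is a solution of 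$x'=A(t)x+f(t,x)$.
   Context: $\|\cdot\|$ is a norm on $\mathbb{R}^n$ and also the induced operator norm. $T(t,s)$ denotes the evolution operator of $x'=A(t)x$, i.e. $T(t,s)x(s)=x(t)$ for every solution $x$. A growth rate is an increasing, differentiable function $\mu:\mathbb{R}\to(0,\infty)$ with $\mu(0)=1$, $\lim_{t\to-\infty}\mu(t)=0$ and $\lim_{t\to+\infty}\mu(t)=+\infty$. The system $x'=A(t)x$ admits an algebraic dichotomy (with respect to $\mu$) if there are projections $P(s)$, $s\in\mathbb{R}$, with $Q(s)=I-P(s)$, and constants $K>0,\alpha>0$ such that $T(t,s)P(s)=P(t)T(t,s)$ for all $t,s$, $\|T(t,s)P(s)\|\le K(\mu(t)/\mu(s))^{-\alpha}$ for $t\ge s$, and $\|T(t,s)Q(s)\|\le K(\mu(s)/\mu(t))^{-\alpha}$ for $t\le s$. *)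

theory Defs
  imports "HOL-Analysis.Analysis"
begin

text \<open>Operator norm of a matrix, induced by the (Euclidean) norm on vectors.\<close>
definition opnorm :: "real ^ 'n ^ 'n \<Rightarrow> real" where
  "opnorm M = onorm (\<lambda>x. M *v x)"

text \<open>Growth rate.\<close>
definition growth_rate :: "(real \<Rightarrow> real) \<Rightarrow> bool" where
  "growth_rate \<mu> \<longleftrightarrow> mono \<mu> \<and> (\<forall>t. \<mu> differentiable (at t)) \<and> (\<forall>t. \<mu> t > 0)
     \<and> \<mu> 0 = 1 \<and> (\<mu> \<longlongrightarrow> 0) at_bot \<and> filterlim \<mu> at_top at_top"

text \<open>Global solutions of x' = A(t) x and of x' = A(t) x + f(t,x).\<close>
definition lin_solution :: "(real \<Rightarrow> real ^ 'n ^ 'n) \<Rightarrow> (real \<Rightarrow> real ^ 'n) \<Rightarrow> bool" where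
  "lin_solution A x \<longleftrightarrow> (\<forall>t. (x has_vector_derivative (A t *v x t)) (at t))"

definition nonlin_solution :: "(real \<Rightarrow> real ^ 'n ^ 'n) \<Rightarrow> (real \<Rightarrow> real ^ 'n \<Rightarrow> real ^ 'n)
    \<Rightarrow> (real \<Rightarrow> real ^ 'n) \<Rightarrow> bool" where
  "nonlin_solution A f x \<longleftrightarrow> (\<forall>t. (x has_vector_derivative (A t *v x t + f t (x t))) (at t))"

text \<open>T is the evolution operator of x' = A(t) x: T(t,s) x(s) = x(t) for every solution x.\<close>
definition evolution_operator :: "(real \<Rightarrow> real ^ 'n ^ 'n) \<Rightarrow> (real \<Rightarrow> real \<Rightarrow> real ^ 'n ^ 'n) \<Rightarrow> bool" where
  "evolution_operator A T \<longleftrightarrow> (\<forall>x. lin_solution A x \<longrightarrow> (\<forall>t s. T t s *v x s = x t))"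

text \<open>Algebraic dichotomy with respect to the growth rate mu, with projections P and constants K, alpha.\<close>
definition algebraic_dichotomy ::
  "(real \<Rightarrow> real \<Rightarrow> real ^ 'n ^ 'n) \<Rightarrow> (real \<Rightarrow> real) \<Rightarrow> (real \<Rightarrow> real ^ 'n ^ 'n) \<Rightarrow> real \<Rightarrow> real \<Rightarrow> bool" where
  "algebraic_dichotomy T \<mu> P K \<alpha> \<longleftrightarrow> K > 0 \<and> \<alpha> > 0
     \<and> (\<forall>s. P s ** P s = P s)
     \<and> (\<forall>t s. T t s ** P s = P t ** T t s)
     \<and> (\<forall>t s. t \<ge> s \<longrightarrow> opnorm (T t s ** P s) \<le> K * (\<mu> t / \<mu> s) powr (- \<alpha>))
     \<and> (\<forall>t s. t \<le> s \<longrightarrow> opnorm (T t s ** (mat 1 - P s)) \<le> K * (\<mu> s / \<mu> t) powr (- \<alpha>))"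

end

theory Submission
  imports Defs
begin

(* ---- part 1 ---- *)

definition sint :: "real \<Rightarrow> real \<Rightarrow> (real \<Rightarrow> 'a::banach) \<Rightarrow> 'a" where
  "sint s t g = (if s \<le> t then integral {s..t} g else - integral {t..s} g)"

lemma sint_same[simp]: "sint s s g = 0"
  by (simp add: sint_def)

lemma sint_split:
  fixes g :: "real \<Rightarrow> 'a::banach"
  assumes g: "continuous_on UNIV g" and "a \<le> s" "a \<le> t"
  shows "sint s t g = integral {a..t} g - integral {a..s} g"
proof (cases "s \<le> t")
  case True
  have "g integrable_on {a..t}"
    by (rule integrable_continuous_real) (rule continuous_on_subset[OF g], auto)
  then have eq: "integral {a..s} g + integral {s..t} g = integral {a..t} g"
    using Henstock_Kurzweil_Integration.integral_combine[of a s t g] assms True by simp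
  have "sint s t g = integral {s..t} g" using True by (simp add: sint_def)
  then show ?thesis by (simp add: eq[symmetric])
next
  case False
  have "g integrable_on {a..s}"
    by (rule integrable_continuous_real) (rule continuous_on_subset[OF g], auto)
  then have eq: "integral {a..t} g + integral {t..s} g = integral {a..s} g"
    using Henstock_Kurzweil_Integration.integral_combine[of a t s g] assms False by simp
  have "sint s t g = - integral {t..s} g" using False by (simp add: sint_def)
  then show ?thesis by (simp add: eq[symmetric])
qed

lemma sint_deriv:
  fixes g :: "real \<Rightarrow> 'a::banach"
  assumes g: "continuous_on UNIV g"
  shows "((\<lambda>t. sint s t g) has_vector_derivative g t) (at t)"
proof -
  define a where "a = min s t - 1"
  have "((\<lambda>u. integral {a..u} g) has_vector_derivative g t) (at t within {a..t+1})"
    by (rule integral_has_vector_derivative[OF continuous_on_subset[OF g]]) (auto simp: a_def)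
  then have "((\<lambda>u. integral {a..u} g) has_vector_derivative g t) (at t within {a<..<t+1})"
    by (rule has_vector_derivative_within_subset) auto
  then have d1: "((\<lambda>u. integral {a..u} g) has_vector_derivative g t) (at t)"
    using at_within_open[of t "{a<..<t+1}"] a_def by auto
  then have "((\<lambda>u. integral {a..u} g - integral {a..s} g) has_vector_derivative g t) (at t)"
    using has_vector_derivative_diff[OF d1 has_vector_derivative_const[of "integral {a..s} g"]] by simp
  then show ?thesis
  proof (rule has_vector_derivative_transform_within_open[where S="{a<..}"])
    fix y assume "y \<in> {a<..}"
    then show "integral {a..y} g - integral {a..s} g = sint s y g"
      using sint_split[OF g, of a s y] a_def by simp
  qed (use a_def in auto)
qed

lemma sint_cont:
  fixes g :: "real \<Rightarrow> 'a::banach"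
  assumes g: "continuous_on UNIV g"
  shows "continuous_on UNIV (\<lambda>t. sint s t g)"
  unfolding continuous_on_eq_continuous_within
  using has_vector_derivative_continuous[OF sint_deriv[OF g]] by simp

lemma sint_diff:
  fixes g h :: "real \<Rightarrow> 'a::banach"
  assumes g: "continuous_on UNIV g" and h: "continuous_on UNIV h"
  shows "sint s t g - sint s t h = sint s t (\<lambda>u. g u - h u)"
proof -
  have i: "g integrable_on {a..b}" "h integrable_on {a..b}" for a b
    using g h continuous_on_subset integrable_continuous_real top_greatest by metis+
  show ?thesis unfolding sint_def using integral_diff[OF i(1) i(2)] by simp
qed

lemma sint_linear:
  fixes g :: "real \<Rightarrow> 'a::euclidean_space" and L :: "'a \<Rightarrow> 'b::euclidean_space"
  assumes g: "continuous_on UNIV g" and L: "bounded_linear L"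
  shows "sint s t (\<lambda>u. L (g u)) = L (sint s t g)"
proof -
  have "g integrable_on {a..b}" for a b
    using g continuous_on_subset integrable_continuous_real top_greatest by metis
  note * = integral_linear[OF this L, unfolded o_def]
  show ?thesis
  proof (cases "s \<le> t")
    case True then show ?thesis by (simp add: sint_def *)
  next
    case False then show ?thesis by (simp add: sint_def * linear_neg[OF bounded_linear.linear[OF L]])
  qed
qed

text \<open>Solutions of ODEs as integral equations.\<close>
lemma cont_comp2:
  fixes F :: "real \<Rightarrow> 'a::topological_space \<Rightarrow> 'b::topological_space"
  assumes Fc: "continuous_on UNIV (\<lambda>(t,x). F t x)" and xc: "continuous_on UNIV x"
  shows "continuous_on UNIV (\<lambda>u. F u (x u))"
proof -
  have 1: "continuous_on UNIV (\<lambda>u. (u, x u))"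
    by (intro continuous_on_Pair continuous_on_id xc)
  have "continuous_on UNIV ((\<lambda>(t,x). F t x) \<circ> (\<lambda>u. (u, x u)))"
    by (rule continuous_on_compose[OF 1]) (rule continuous_on_subset[OF Fc], simp)
  then show ?thesis by (simp add: o_def)
qed

lemma deriv_cont:
  assumes x: "\<And>t. (x has_vector_derivative x' t) (at t)"
  shows "continuous_on UNIV x"
  unfolding continuous_on_eq_continuous_within
  using has_vector_derivative_continuous[OF x] by simp

lemma sol_integral:
  fixes F :: "real \<Rightarrow> 'a::euclidean_space \<Rightarrow> 'a"
  assumes Fc: "continuous_on UNIV (\<lambda>(t,x). F t x)"
    and x: "\<And>t. (x has_vector_derivative F t (x t)) (at t)"
  shows "x t = x s + sint s t (\<lambda>u. F u (x u))"
proof -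
  have xc: "continuous_on UNIV x" by (rule deriv_cont[OF x])
  have gc: "continuous_on UNIV (\<lambda>u. F u (x u))"
    by (rule cont_comp2[OF Fc xc])
  have D: "((\<lambda>u. x u - sint s u (\<lambda>u. F u (x u))) has_derivative (\<lambda>h. 0)) (at u within UNIV)" for u
  proof -
    have "((\<lambda>u. x u - sint s u (\<lambda>u. F u (x u))) has_vector_derivative F u (x u) - F u (x u)) (at u)"
      by (rule has_vector_derivative_diff[OF x sint_deriv[OF gc]])
    then show ?thesis by (simp add: has_vector_derivative_def)
  qed
  have "x t - sint s t (\<lambda>u. F u (x u)) = x s - sint s s (\<lambda>u. F u (x u))"
    by (rule has_derivative_zero_unique[OF convex_UNIV D]) simp_all
  then show ?thesis by (simp add: diff_eq_eq)
qed

(* ---- part 2 ---- *)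

locale lam =
  fixes \<Lambda> l :: "real \<Rightarrow> real"
  assumes \<Lambda>d: "\<And>t. (\<Lambda> has_real_derivative l t) (at t)" and lpos: "\<And>t. 0 \<le> l t"
begin

lemma Lmono: "s \<le> t \<Longrightarrow> \<Lambda> s \<le> \<Lambda> t"
  apply (rule DERIV_nonneg_imp_nondecreasing[of s t \<Lambda>])
  using \<Lambda>d lpos by auto

lemma Lcont: "continuous_on UNIV \<Lambda>"
  by (meson DERIV_continuous_on \<Lambda>d)

definition w where "w s t = exp (2 * \<bar>\<Lambda> t - \<Lambda> s\<bar>)"

lemma w_ge1: "1 \<le> w s t"
  by (simp add: w_def)

lemma w_pos: "0 < w s t"
  by (simp add: w_def)

lemma w_same[simp]: "w s s = 1"
  by (simp add: w_def)

lemma w_cont: "continuous_on UNIV (w s)"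
  unfolding w_def by (intro continuous_intros Lcont)

lemma int_fwd:
  assumes "s \<le> t"
  shows "((\<lambda>u. l u * w s u) has_integral (w s t - 1) / 2) {s..t}"
proof -
  define f where "f u = exp (2 * (\<Lambda> u - \<Lambda> s)) / 2" for u
  have d: "(f has_real_derivative l u * exp (2 * (\<Lambda> u - \<Lambda> s))) (at u)" for u
    unfolding f_def by (auto intro!: derivative_eq_intros \<Lambda>d)
  have "((\<lambda>u. l u * exp (2 * (\<Lambda> u - \<Lambda> s))) has_integral (f t - f s)) {s..t}"
    by (rule fundamental_theorem_of_calculus[OF assms])
       (use d in \<open>auto simp: has_real_derivative_iff_has_vector_derivative[symmetric] intro: has_field_derivative_at_within\<close>)
  moreover have "f t - f s = (w s t - 1) / 2"
    using Lmono[OF assms] by (simp add: f_def w_def diff_divide_distrib)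
  moreover have "l u * exp (2 * (\<Lambda> u - \<Lambda> s)) = l u * w s u" if "u \<in> {s..t}" for u
    using Lmono[of s u] that by (simp add: w_def)
  ultimately show ?thesis
    by (metis (no_types, lifting) has_integral_eq)
qed

lemma int_bwd:
  assumes "t \<le> s"
  shows "((\<lambda>u. l u * w s u) has_integral (w s t - 1) / 2) {t..s}"
proof -
  define f where "f u = - exp (2 * (\<Lambda> s - \<Lambda> u)) / 2" for u
  have d: "(f has_real_derivative l u * exp (2 * (\<Lambda> s - \<Lambda> u))) (at u)" for u
    unfolding f_def by (auto intro!: derivative_eq_intros \<Lambda>d)
  have "((\<lambda>u. l u * exp (2 * (\<Lambda> s - \<Lambda> u))) has_integral (f s - f t)) {t..s}"
    by (rule fundamental_theorem_of_calculus[OF assms])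
       (use d in \<open>auto simp: has_real_derivative_iff_has_vector_derivative[symmetric] intro: has_field_derivative_at_within\<close>)
  moreover have "f s - f t = (w s t - 1) / 2"
    using Lmono[OF assms] by (simp add: f_def w_def diff_divide_distrib)
  moreover have "l u * exp (2 * (\<Lambda> s - \<Lambda> u)) = l u * w s u" if "u \<in> {t..s}" for u
    using Lmono[of u s] that by (simp add: w_def abs_minus_commute)
  ultimately show ?thesis
    by (metis (no_types, lifting) has_integral_eq)
qed

lemma sint_bound:
  fixes g :: "real \<Rightarrow> 'a::euclidean_space"
  assumes g: "continuous_on UNIV g" and c: "0 \<le> c"
    and b: "\<And>u. u \<in> {min s t..max s t} \<Longrightarrow> norm (g u) \<le> c * l u * w s u"
  shows "norm (sint s t g) \<le> c * (w s t - 1) / 2"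
proof (cases "s \<le> t")
  case True
  have "norm (integral {s..t} g) \<le> c * ((w s t - 1) / 2)"
  proof (rule integral_norm_bound_integral')
    show "((\<lambda>u. c * (l u * w s u)) has_integral c * ((w s t - 1) / 2)) {s..t}"
      by (rule has_integral_mult_right[OF int_fwd[OF True]])
    show "g \<in> borel_measurable (lebesgue_on {s..t})"
      by (rule continuous_imp_measurable_on_sets_lebesgue[OF continuous_on_subset[OF g]]) auto
    fix u assume "u \<in> {s..t}" then show "norm (g u) \<le> c * (l u * w s u)"
      using b[of u] True by (simp add: mult.assoc)
  qed auto
  then show ?thesis using True by (simp add: sint_def)
next
  case False
  have "norm (integral {t..s} g) \<le> c * ((w s t - 1) / 2)"
  proof (rule integral_norm_bound_integral')
    show "((\<lambda>u. c * (l u * w s u)) has_integral c * ((w s t - 1) / 2)) {t..s}"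
      by (rule has_integral_mult_right[OF int_bwd]) (use False in auto)
    show "g \<in> borel_measurable (lebesgue_on {t..s})"
      by (rule continuous_imp_measurable_on_sets_lebesgue[OF continuous_on_subset[OF g]]) auto
    fix u assume "u \<in> {t..s}" then show "norm (g u) \<le> c * (l u * w s u)"
      using b[of u] False by (simp add: mult.assoc)
  qed auto
  then show ?thesis using False by (simp add: sint_def)
qed

end

(* ---- part 3 ---- *)

locale ode = lam +
  fixes F :: "real \<Rightarrow> 'a::euclidean_space \<Rightarrow> 'a"
  assumes Fc: "continuous_on UNIV (\<lambda>(t,x). F t x)"
    and Flip: "\<And>t x y. norm (F t x - F t y) \<le> l t * norm (x - y)"
    and F0: "\<And>t. norm (F t 0) \<le> l t"
begin

definition sol where "sol x \<longleftrightarrow> (\<forall>t. (x has_vector_derivative F t (x t)) (at t))"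

lemma compare:
  assumes x: "sol x" and y: "sol y"
  shows "norm (x t - y t) \<le> 2 * w s t * norm (x s - y s)"
proof -
  define I where "I = {min s t..max s t}"
  have xd: "\<And>t. (x has_vector_derivative F t (x t)) (at t)" using x by (simp add: sol_def)
  have yd: "\<And>t. (y has_vector_derivative F t (y t)) (at t)" using y by (simp add: sol_def)
  have xc: "continuous_on UNIV x" by (rule deriv_cont[OF xd])
  have yc: "continuous_on UNIV y" by (rule deriv_cont[OF yd])
  have gx: "continuous_on UNIV (\<lambda>u. F u (x u))" by (rule cont_comp2[OF Fc xc])
  have gy: "continuous_on UNIV (\<lambda>u. F u (y u))" by (rule cont_comp2[OF Fc yc])
  define \<phi> where "\<phi> u = norm (x u - y u) / w s u" for u
  have \<phi>c: "continuous_on I \<phi>"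
    unfolding \<phi>_def
    by (intro continuous_intros continuous_on_subset[OF xc] continuous_on_subset[OF yc]
        continuous_on_subset[OF w_cont]) (auto simp: w_pos[THEN less_imp_neq, symmetric])
  obtain r0 where r0: "r0 \<in> I" "\<And>u. u \<in> I \<Longrightarrow> \<phi> u \<le> \<phi> r0"
    using continuous_attains_sup[OF _ _ \<phi>c] unfolding I_def by fastforce
  define D where "D = \<phi> r0"
  have D0: "0 \<le> D" unfolding D_def \<phi>_def using w_pos[of s r0] by simp
  have key: "\<phi> r \<le> norm (x s - y s) + D / 2" if r: "r \<in> I" for r
  proof -
    have "x r - y r = (x s + sint s r (\<lambda>u. F u (x u))) - (y s + sint s r (\<lambda>u. F u (y u)))"
      using sol_integral[OF Fc xd, of r s] sol_integral[OF Fc yd, of r s] by simp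
    also have "\<dots> = (x s - y s) + sint s r (\<lambda>u. F u (x u) - F u (y u))"
      using sint_diff[OF gx gy, of s r] by (simp add: algebra_simps)
    finally have eq: "x r - y r = (x s - y s) + sint s r (\<lambda>u. F u (x u) - F u (y u))" .
    have "norm (sint s r (\<lambda>u. F u (x u) - F u (y u))) \<le> D * (w s r - 1) / 2"
    proof (rule sint_bound)
      show "continuous_on UNIV (\<lambda>u. F u (x u) - F u (y u))"
        by (intro continuous_intros gx gy)
      show "0 \<le> D" by (rule D0)
      fix u assume u: "u \<in> {min s r..max s r}"
      then have uI: "u \<in> I" using r unfolding I_def by auto
      have "norm (F u (x u) - F u (y u)) \<le> l u * norm (x u - y u)" by (rule Flip)
      also have "norm (x u - y u) = \<phi> u * w s u"
        unfolding \<phi>_def using w_pos[of s u] by simp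
      also have "l u * (\<phi> u * w s u) \<le> l u * (D * w s u)"
        using r0(2)[OF uI] lpos[of u] w_pos[of s u] unfolding D_def
        by (intro mult_left_mono mult_right_mono) auto
      finally show "norm (F u (x u) - F u (y u)) \<le> D * l u * w s u" by (simp add: ac_simps)
    qed
    then have "norm (x r - y r) \<le> norm (x s - y s) + D * (w s r - 1) / 2"
      unfolding eq by (rule order_trans[OF norm_triangle_ineq add_left_mono])
    also have "\<dots> \<le> (norm (x s - y s) + D / 2) * w s r"
    proof -
      have a: "norm (x s - y s) \<le> norm (x s - y s) * w s r"
        using mult_left_mono[OF w_ge1[of s r] norm_ge_zero] by simp
      have b: "(norm (x s - y s) + D / 2) * w s r = norm (x s - y s) * w s r + D / 2 * w s r"
        by (rule distrib_right)
      have c: "D * (w s r - 1) / 2 = D / 2 * w s r - D / 2"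
        by (simp add: field_simps)
      show ?thesis unfolding b c using a D0 by linarith
    qed
    finally show ?thesis
      unfolding \<phi>_def using w_pos[of s r] by (simp add: divide_le_eq)
  qed
  have "D \<le> 2 * norm (x s - y s)"
    using key[OF r0(1)] unfolding D_def by simp
  moreover have "\<phi> t \<le> D" using r0(2)[of t] unfolding I_def D_def by auto
  ultimately have "norm (x t - y t) / w s t \<le> 2 * norm (x s - y s)"
    unfolding \<phi>_def by simp
  then show ?thesis using w_pos[of s t] by (simp add: divide_le_eq ac_simps)
qed

lemma unique:
  assumes "sol x" "sol y" "x s = y s"
  shows "x = y"
proof
  fix t show "x t = y t" using compare[OF assms(1,2), of t s] assms(3) by simp
qed

lemma exists: "\<exists>x. sol x \<and> x s = \<xi>"
proof -
  define G where "G u r = F r (w s r *\<^sub>R apply_bcontfun u r)" for u r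
  have Gc: "continuous_on UNIV (G u)" for u
    unfolding G_def by (rule cont_comp2[OF Fc]) (intro continuous_intros w_cont continuous_on_apply_bcontfun)
  have Gb: "norm (G u r) \<le> (1 + norm u) * l r * w s r" for u r
  proof -
    have "norm (G u r) \<le> norm (G u r - F r 0) + norm (F r 0)"
      using norm_triangle_sub[of "G u r" "F r 0"] by (simp add: add.commute)
    also have "\<dots> \<le> l r * norm (w s r *\<^sub>R apply_bcontfun u r) + l r"
      unfolding G_def by (rule add_mono[OF _ F0]) (use Flip[of r "w s r *\<^sub>R apply_bcontfun u r" 0] in simp)
    also have "norm (w s r *\<^sub>R apply_bcontfun u r) \<le> w s r * norm u"
      using w_pos[of s r] norm_bounded[of u r] by (simp add: mult_left_mono)
    finally have "norm (G u r) \<le> l r * (w s r * norm u) + l r"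
      using lpos[of r] by (smt (verit) mult_left_mono)
    also have "\<dots> \<le> (1 + norm u) * l r * w s r"
      using w_ge1[of s r] lpos[of r] by (simp add: algebra_simps) (smt (verit) mult_left_mono mult_le_cancel_left1)
    finally show ?thesis .
  qed
  define \<Psi>f where "\<Psi>f u t = inverse (w s t) *\<^sub>R (\<xi> + sint s t (G u))" for u t
  have \<Psi>mem: "\<Psi>f u \<in> bcontfun" for u
  proof (rule bcontfun_normI)
    show "continuous_on UNIV (\<Psi>f u)"
      unfolding \<Psi>f_def
      by (intro continuous_intros w_cont sint_cont Gc) (simp add: w_pos[THEN less_imp_neq, symmetric])
    fix t
    have "norm (sint s t (G u)) \<le> (1 + norm u) * (w s t - 1) / 2"
      by (rule sint_bound[OF Gc]) (auto intro: Gb)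
    then have "norm (\<xi> + sint s t (G u)) \<le> norm \<xi> + (1 + norm u) * (w s t - 1) / 2"
      by (rule order_trans[OF norm_triangle_ineq add_left_mono])
    also have "\<dots> \<le> (norm \<xi> + (1 + norm u) / 2) * w s t"
    proof -
      have a: "norm \<xi> \<le> norm \<xi> * w s t"
        using mult_left_mono[OF w_ge1[of s t] norm_ge_zero] by simp
      have b: "(norm \<xi> + (1 + norm u) / 2) * w s t = norm \<xi> * w s t + (1 + norm u) / 2 * w s t"
        by (rule distrib_right)
      have c: "(1 + norm u) * (w s t - 1) / 2 = (1 + norm u) / 2 * w s t - (1 + norm u) / 2"
        by (simp add: field_simps)
      have d: "0 \<le> 1 + norm u" by simp
      have d': "0 \<le> (1 + norm u) / 2" using d by simp
      have aux: "\<And>a c w::real. a \<le> a * w \<Longrightarrow> 0 \<le> c \<Longrightarrow> a + (c * w - c) \<le> a * w + c * w" by linarith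
      show ?thesis unfolding b c by (rule aux[OF a d'])
    qed
    finally have "norm (\<xi> + sint s t (G u)) / w s t \<le> norm \<xi> + (1 + norm u) / 2"
      using w_pos[of s t] by (simp add: pos_divide_le_eq)
    moreover have "norm (\<Psi>f u t) = norm (\<xi> + sint s t (G u)) / w s t"
      unfolding \<Psi>f_def norm_scaleR using w_pos[of s t] by (simp add: divide_inverse mult.commute)
    ultimately show "norm (\<Psi>f u t) \<le> norm \<xi> + (1 + norm u) / 2" by simp
  qed
  define \<Psi> where "\<Psi> u = Bcontfun (\<Psi>f u)" for u
  have \<Psi>app: "apply_bcontfun (\<Psi> u) = \<Psi>f u" for u
    unfolding \<Psi>_def using \<Psi>mem by (simp add: Bcontfun_inverse)
  have contr: "dist (\<Psi> u) (\<Psi> v) \<le> (1/2) * dist u v" for u v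
  proof (rule dist_bound)
    fix t
    have "\<Psi>f u t - \<Psi>f v t = inverse (w s t) *\<^sub>R sint s t (\<lambda>r. G u r - G v r)"
      unfolding \<Psi>f_def using sint_diff[OF Gc[of u] Gc[of v], of s t] by (simp add: algebra_simps)
    moreover have "norm (sint s t (\<lambda>r. G u r - G v r)) \<le> dist u v * (w s t - 1) / 2"
    proof (rule sint_bound)
      show "continuous_on UNIV (\<lambda>r. G u r - G v r)" by (intro continuous_intros Gc)
      fix r
      have "norm (G u r - G v r) \<le> l r * norm (w s r *\<^sub>R apply_bcontfun u r - w s r *\<^sub>R apply_bcontfun v r)"
        unfolding G_def by (rule Flip)
      also have "norm (w s r *\<^sub>R apply_bcontfun u r - w s r *\<^sub>R apply_bcontfun v r) \<le> w s r * dist u v"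
        using w_pos[of s r] dist_bounded[of u r v]
        by (simp add: dist_norm scaleR_diff_right[symmetric] mult_left_mono)
      finally show "norm (G u r - G v r) \<le> dist u v * l r * w s r"
        using lpos[of r] by (smt (verit) mult.commute mult.left_commute mult_left_mono)
    qed simp
    ultimately have "norm (\<Psi>f u t - \<Psi>f v t) \<le> inverse (w s t) * (dist u v * (w s t - 1) / 2)"
      using w_pos[of s t] by (simp add: mult_left_mono)
    also have "\<dots> \<le> (1/2) * dist u v"
      using w_pos[of s t] w_ge1[of s t] by (simp add: field_simps)
    finally show "dist (\<Psi> u t) (\<Psi> v t) \<le> (1/2) * dist u v"
      by (simp add: \<Psi>app dist_norm)
  qed
  obtain u where u: "\<Psi> u = u"
    using banach_fix_type[of "1/2" \<Psi>] contr by auto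
  define x where "x t = w s t *\<^sub>R apply_bcontfun u t" for t
  have xeq: "x t = \<xi> + sint s t (\<lambda>r. F r (x r))" for t
  proof -
    have "apply_bcontfun u t = \<Psi>f u t" using u \<Psi>app by metis
    then show ?thesis
      unfolding x_def \<Psi>f_def G_def using w_pos[of s t] by simp
  qed
  have xc: "continuous_on UNIV x" unfolding x_def by (intro continuous_intros w_cont continuous_on_apply_bcontfun)
  have gx: "continuous_on UNIV (\<lambda>r. F r (x r))" by (rule cont_comp2[OF Fc xc])
  have "sol x"
    unfolding sol_def
  proof
    fix t
    have "((\<lambda>t. \<xi> + sint s t (\<lambda>r. F r (x r))) has_vector_derivative 0 + F t (x t)) (at t)"
      by (intro has_vector_derivative_add has_vector_derivative_const sint_deriv gx)
    then show "(x has_vector_derivative F t (x t)) (at t)"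
      by (simp add: xeq[symmetric])
  qed
  moreover have "x s = \<xi>" using xeq[of s] by simp
  ultimately show ?thesis by blast
qed

end

(* ---- part 4 ---- *)

lemma improper_bot:
  fixes \<rho> \<rho>' :: "real \<Rightarrow> real"
  assumes d: "\<And>s. s \<le> t \<Longrightarrow> (\<rho> has_real_derivative \<rho>' s) (at s)"
    and nn: "\<And>s. s \<le> t \<Longrightarrow> 0 \<le> \<rho>' s"
    and lim: "(\<rho> \<longlongrightarrow> 0) at_bot"
  shows "(\<rho>' has_integral \<rho> t) {..t}"
proof -
  define f where "f k x = (if x \<in> {t - real k..t} then \<rho>' x else 0)" for k x
  have fint: "(f k has_integral (\<rho> t - \<rho> (t - real k))) {..t}" for k
  proof -
    have "(\<rho>' has_integral (\<rho> t - \<rho> (t - real k))) {t - real k..t}"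
      by (rule fundamental_theorem_of_calculus)
         (use d in \<open>auto simp: has_real_derivative_iff_has_vector_derivative[symmetric] intro: has_field_derivative_at_within\<close>)
    then show ?thesis unfolding f_def by (subst has_integral_restrict) auto
  qed
  have mono: "f k x \<le> f (Suc k) x" if "x \<in> {..t}" for k x
    using nn that unfolding f_def by auto
  have conv: "(\<lambda>k. f k x) \<longlonglongrightarrow> \<rho>' x" if "x \<in> {..t}" for x
  proof (rule tendsto_eventually)
    obtain N :: nat where "t - x \<le> real N" using real_arch_simple by blast
    then show "\<forall>\<^sub>F k in sequentially. f k x = \<rho>' x"
      unfolding eventually_sequentially f_def using that by (intro exI[of _ N]) auto
  qed
  have \<rho>mono: "\<rho> a \<le> \<rho> b" if "a \<le> b" "b \<le> t" for a b
  proof (rule DERIV_nonneg_imp_nondecreasing[of a b \<rho>])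
    fix x assume "a \<le> x" "x \<le> b"
    then show "\<exists>y. (\<rho> has_real_derivative y) (at x) \<and> 0 \<le> y"
      using d[of x] nn[of x] that by auto
  qed (use that in simp)
  have \<rho>nn: "0 \<le> \<rho> a" if "a \<le> t" for a
  proof (rule tendsto_upperbound[OF lim])
    show "\<forall>\<^sub>F x in at_bot. \<rho> x \<le> \<rho> a"
      unfolding eventually_at_bot_linorder using \<rho>mono that by (intro exI[of _ a]) auto
  qed simp
  have lim2: "(\<lambda>k. \<rho> (t - real k)) \<longlonglongrightarrow> 0"
  proof -
    have "filterlim (\<lambda>k::nat. t - real k) at_bot sequentially"
    proof -
      have "filterlim (\<lambda>k::nat. - t + real k) at_top sequentially"
        by (rule filterlim_tendsto_add_at_top[OF tendsto_const filterlim_real_sequentially])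
      then show ?thesis unfolding filterlim_uminus_at_bot by simp
    qed
    then show ?thesis using lim filterlim_compose by blast
  qed
  have bnd: "bounded (range (\<lambda>k. integral {..t} (f k)))"
  proof -
    have "\<bar>integral {..t} (f k)\<bar> \<le> \<rho> t" for k
      using fint[of k, THEN integral_unique] \<rho>nn[of "t - real k"] \<rho>mono[of "t - real k" t] by simp
    then show ?thesis unfolding bounded_iff by (intro exI[of _ "\<rho> t"]) auto
  qed
  have mc: "\<rho>' integrable_on {..t} \<and> (\<lambda>k. integral {..t} (f k)) \<longlonglongrightarrow> integral {..t} \<rho>'"
    by (rule monotone_convergence_increasing[OF _ mono conv bnd]) (use fint in blast)+
  moreover have "(\<lambda>k. integral {..t} (f k)) \<longlonglongrightarrow> \<rho> t - 0"
    using fint[THEN integral_unique] by (simp only:) (intro tendsto_intros lim2)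
  ultimately have "integral {..t} \<rho>' = \<rho> t" using LIMSEQ_unique by fastforce
  then show ?thesis using mc by (metis has_integral_integrable_integral)
qed

lemma improper_top:
  fixes \<rho> \<rho>' :: "real \<Rightarrow> real"
  assumes d: "\<And>s. t \<le> s \<Longrightarrow> (\<rho> has_real_derivative \<rho>' s) (at s)"
    and nn: "\<And>s. t \<le> s \<Longrightarrow> 0 \<le> \<rho>' s"
    and lim: "(\<rho> \<longlongrightarrow> 0) at_top"
  shows "(\<rho>' has_integral (- \<rho> t)) {t..}"
proof -
  define f where "f k x = (if x \<in> {t..t + real k} then \<rho>' x else 0)" for k x
  have fint: "(f k has_integral (\<rho> (t + real k) - \<rho> t)) {t..}" for k
  proof -
    have "(\<rho>' has_integral (\<rho> (t + real k) - \<rho> t)) {t..t + real k}"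
      by (rule fundamental_theorem_of_calculus)
         (use d in \<open>auto simp: has_real_derivative_iff_has_vector_derivative[symmetric] intro: has_field_derivative_at_within\<close>)
    then show ?thesis unfolding f_def by (subst has_integral_restrict) auto
  qed
  have mono: "f k x \<le> f (Suc k) x" if "x \<in> {t..}" for k x
    using nn that unfolding f_def by auto
  have conv: "(\<lambda>k. f k x) \<longlonglongrightarrow> \<rho>' x" if "x \<in> {t..}" for x
  proof (rule tendsto_eventually)
    obtain N :: nat where "x - t \<le> real N" using real_arch_simple by blast
    then show "\<forall>\<^sub>F k in sequentially. f k x = \<rho>' x"
      unfolding eventually_sequentially f_def using that by (intro exI[of _ N]) auto
  qed
  have \<rho>mono: "\<rho> a \<le> \<rho> b" if "a \<le> b" "t \<le> a" for a b
  proof (rule DERIV_nonneg_imp_nondecreasing[of a b \<rho>])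
    fix x assume "a \<le> x" "x \<le> b"
    then show "\<exists>y. (\<rho> has_real_derivative y) (at x) \<and> 0 \<le> y"
      using d[of x] nn[of x] that by auto
  qed (use that in simp)
  have \<rho>np: "\<rho> a \<le> 0" if "t \<le> a" for a
  proof (rule tendsto_lowerbound[OF lim])
    show "\<forall>\<^sub>F x in at_top. \<rho> a \<le> \<rho> x"
      unfolding eventually_at_top_linorder using \<rho>mono that by (intro exI[of _ a]) auto
  qed simp
  have lim2: "(\<lambda>k. \<rho> (t + real k)) \<longlonglongrightarrow> 0"
  proof -
    have "filterlim (\<lambda>k::nat. t + real k) at_top sequentially"
      by (rule filterlim_tendsto_add_at_top[OF tendsto_const filterlim_real_sequentially])
    then show ?thesis using lim filterlim_compose by blast
  qed
  have bnd: "bounded (range (\<lambda>k. integral {t..} (f k)))"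
  proof -
    have "\<bar>integral {t..} (f k)\<bar> \<le> - \<rho> t" for k
      using fint[of k, THEN integral_unique] \<rho>np[of "t + real k"] \<rho>mono[of t "t + real k"] by simp
    then show ?thesis unfolding bounded_iff by (intro exI[of _ "- \<rho> t"]) auto
  qed
  have mc: "\<rho>' integrable_on {t..} \<and> (\<lambda>k. integral {t..} (f k)) \<longlonglongrightarrow> integral {t..} \<rho>'"
    by (rule monotone_convergence_increasing[OF _ mono conv bnd]) (use fint in blast)+
  moreover have "(\<lambda>k. integral {t..} (f k)) \<longlonglongrightarrow> 0 - \<rho> t"
    using fint[THEN integral_unique] by (simp only:) (intro tendsto_intros lim2)
  ultimately have "integral {t..} \<rho>' = - \<rho> t" using LIMSEQ_unique by fastforce
  then show ?thesis using mc by (metis has_integral_integrable_integral)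
qed

(* ---- part 5 ---- *)

locale setting =
  fixes A :: "real \<Rightarrow> real ^ 'n ^ 'n"
    and T :: "real \<Rightarrow> real \<Rightarrow> real ^ 'n ^ 'n"
    and P :: "real \<Rightarrow> real ^ 'n ^ 'n"
    and \<mu> :: "real \<Rightarrow> real"
    and f :: "real \<Rightarrow> real ^ 'n \<Rightarrow> real ^ 'n"
    and K \<alpha> \<beta> \<gamma> :: real
  assumes A_cont: "continuous_on UNIV A"
    and A_bdd: "bounded (range A)"
    and mu: "growth_rate \<mu>"
    and T: "evolution_operator A T"
    and dich: "algebraic_dichotomy T \<mu> P K \<alpha>"
    and f_cont: "continuous_on UNIV (\<lambda>(t, x). f t x)"
    and \<beta>: "\<beta> \<ge> 0" and \<gamma>: "\<gamma> \<ge> 0"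
    and f_bdd: "\<And>t x. norm (f t x) \<le> \<beta> * deriv \<mu> t / \<mu> t"
    and f_lip: "\<And>t x1 x2. norm (f t x1 - f t x2) \<le> \<gamma> * deriv \<mu> t / \<mu> t * norm (x1 - x2)"
    and small: "6 * K * \<gamma> / \<alpha> < 1"
begin

definition "\<mu>' = deriv \<mu>"

lemma mu_pos: "0 < \<mu> t" using mu by (simp add: growth_rate_def)
lemma mu_mono: "mono \<mu>" using mu by (simp add: growth_rate_def)
lemma mu_d: "(\<mu> has_real_derivative \<mu>' t) (at t)"
  using mu unfolding growth_rate_def \<mu>'_def by (simp add: DERIV_deriv_iff_real_differentiable)
lemma mu_cont: "continuous_on UNIV \<mu>"
  by (meson DERIV_continuous_on mu_d)
lemma mu'_nn: "0 \<le> \<mu>' t"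
proof (rule ccontr)
  assume "\<not> 0 \<le> \<mu>' t"
  then have "\<mu>' t < 0" by simp
  from DERIV_neg_dec_right[OF mu_d this] obtain d where d: "d > 0" "\<And>h. h > 0 \<Longrightarrow> h < d \<Longrightarrow> \<mu> (t + h) < \<mu> t"
    by blast
  have "\<mu> t \<le> \<mu> (t + d/2)" using mu_mono d(1) by (simp add: monoD)
  with d(2)[of "d/2"] d(1) show False by simp
qed
lemma K_pos: "0 < K" and \<alpha>_pos: "0 < \<alpha>"
  using dich by (auto simp: algebraic_dichotomy_def)
lemma P_idem: "P s ** P s = P s"
  using dich by (auto simp: algebraic_dichotomy_def)
lemma P_comm: "T t s ** P s = P t ** T t s"
  using dich by (auto simp: algebraic_dichotomy_def)
lemma dichP: "t \<ge> s \<Longrightarrow> opnorm (T t s ** P s) \<le> K * (\<mu> t / \<mu> s) powr (- \<alpha>)"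
  using dich by (auto simp: algebraic_dichotomy_def)
lemma dichQ: "t \<le> s \<Longrightarrow> opnorm (T t s ** (mat 1 - P s)) \<le> K * (\<mu> s / \<mu> t) powr (- \<alpha>)"
  using dich by (auto simp: algebraic_dichotomy_def)

lemma opnorm_bound: "norm (B *v x) \<le> opnorm B * norm x"
  unfolding opnorm_def by (rule onorm[OF matrix_vector_mul_bounded_linear])

lemma Mex: "\<exists>M\<ge>0. \<forall>t x. norm (A t *v x) \<le> M * norm x"
proof -
  obtain B where B: "\<And>t. norm (A t) \<le> B"
    using A_bdd unfolding bounded_iff by auto
  have "\<bar>A t $ i $ j\<bar> \<le> B" for t i j
  proof -
    have "\<bar>A t $ i $ j\<bar> \<le> norm (A t $ i)" by (rule component_le_norm_cart)
    also have "\<dots> \<le> norm (A t)" by (rule Finite_Cartesian_Product.norm_nth_le)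
    finally show ?thesis using B[of t] by linarith
  qed
  then have "onorm ((*v) (A t)) \<le> real CARD('n) * real CARD('n) * B" for t
    by (rule onorm_le_matrix_component)
  then have "norm (A t *v x) \<le> (real CARD('n) * real CARD('n) * \<bar>B\<bar>) * norm x" for t x
  proof -
    have B0: "B \<le> \<bar>B\<bar>" by simp
    have "norm (A t *v x) \<le> onorm ((*v) (A t)) * norm x"
      by (rule onorm[OF matrix_vector_mul_bounded_linear])
    also have "\<dots> \<le> (real CARD('n) * real CARD('n) * B) * norm x"
      by (rule mult_right_mono[OF \<open>onorm ((*v) (A t)) \<le> _\<close> norm_ge_zero])
    also have "\<dots> \<le> (real CARD('n) * real CARD('n) * \<bar>B\<bar>) * norm x"
      by (intro mult_right_mono mult_left_mono B0) auto
    finally show ?thesis .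
  qed
  then show ?thesis by (intro exI[of _ "real CARD('n) * real CARD('n) * \<bar>B\<bar>"]) auto
qed

definition "M = (SOME M. 0 \<le> M \<and> (\<forall>t x. norm (A t *v x) \<le> M * norm x))"
lemma M_nn: "0 \<le> M" and A_norm: "norm (A t *v x) \<le> M * norm x"
  using someI_ex[OF Mex] unfolding M_def by auto

lemma A_cont2: "continuous_on UNIV (\<lambda>(t,x). A t *v (x::real^'n))"
proof -
  have Ac: "continuous_on UNIV (\<lambda>p::real \<times> (real^'n). A (fst p))"
    by (rule continuous_on_compose2[OF A_cont continuous_on_fst[OF continuous_on_id]]) auto
  have Aij: "continuous_on UNIV (\<lambda>p::real \<times> (real^'n). A (fst p) $ i $ j)" for i j
    by (intro continuous_on_component Ac)
  have xj: "continuous_on UNIV (\<lambda>p::real \<times> (real^'n). snd p $ j)" for j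
    by (intro continuous_on_component continuous_on_snd continuous_on_id)
  show ?thesis
    unfolding matrix_vector_mult_def case_prod_unfold
    by (rule continuous_on_vec_lambda, rule continuous_on_sum, rule continuous_on_mult[OF Aij xj])
qed

sublocale lin: ode "\<lambda>t. M * t" "\<lambda>t. M" "\<lambda>t x. A t *v x"
proof
  show "((\<lambda>t. M * t) has_real_derivative M) (at t)" for t
    by (auto intro!: derivative_eq_intros)
  show "0 \<le> M" by (rule M_nn)
  show "continuous_on UNIV (\<lambda>(t,x). A t *v (x::real^'n))" by (rule A_cont2)
  show "norm (A t *v x - A t *v y) \<le> M * norm (x - y)" for t x y
    using A_norm[of t "x - y"] by (simp add: matrix_vector_mult_diff_distrib)
  show "norm (A t *v 0) \<le> M" for t using M_nn by simp
qed

lemma lin_sol_iff: "lin.sol x \<longleftrightarrow> lin_solution A x"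
  by (simp add: lin.sol_def lin_solution_def)

sublocale nl: ode "\<lambda>t. M * t + (\<beta> + \<gamma>) * ln (\<mu> t)" "\<lambda>t. M + (\<beta> + \<gamma>) * (\<mu>' t / \<mu> t)" "\<lambda>t x. A t *v x + f t x"
proof
  show "((\<lambda>t. M * t + (\<beta> + \<gamma>) * ln (\<mu> t)) has_real_derivative M + (\<beta> + \<gamma>) * (\<mu>' t / \<mu> t)) (at t)" for t
  proof -
    have "((\<lambda>t. ln (\<mu> t)) has_real_derivative inverse (\<mu> t) * \<mu>' t) (at t)"
      by (rule DERIV_chain2[OF DERIV_ln[OF mu_pos] mu_d])
    then have "((\<lambda>t. M * t + (\<beta> + \<gamma>) * ln (\<mu> t)) has_real_derivative M * 1 + (\<beta> + \<gamma>) * (inverse (\<mu> t) * \<mu>' t)) (at t)"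
      by (intro DERIV_add DERIV_cmult DERIV_ident)
    then show ?thesis by (simp add: divide_inverse mult.commute)
  qed
  show "0 \<le> M + (\<beta> + \<gamma>) * (\<mu>' t / \<mu> t)" for t
    using M_nn \<beta> \<gamma> mu'_nn[of t] mu_pos[of t] by simp
  show "continuous_on UNIV (\<lambda>(t,x). A t *v x + f t (x::real^'n))"
    using continuous_on_add[OF A_cont2 f_cont] by (simp add: case_prod_unfold)
  show "norm (A t *v x + f t x - (A t *v y + f t y)) \<le> (M + (\<beta> + \<gamma>) * (\<mu>' t / \<mu> t)) * norm (x - y)" for t x y
  proof -
    have "norm (A t *v x + f t x - (A t *v y + f t y)) \<le> norm (A t *v (x - y)) + norm (f t x - f t y)"
    proof -
      have "A t *v x + f t x - (A t *v y + f t y) = A t *v (x - y) + (f t x - f t y)"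
        by (simp add: matrix_vector_mult_diff_distrib)
      then show ?thesis by (metis norm_triangle_ineq)
    qed
    also have "\<dots> \<le> M * norm (x - y) + \<gamma> * (\<mu>' t / \<mu> t) * norm (x - y)"
      using A_norm f_lip[of t x y] by (intro add_mono) (auto simp: \<mu>'_def)
    also have "\<dots> = M * norm (x - y) + \<gamma> * ((\<mu>' t / \<mu> t) * norm (x - y))"
      by (simp add: mult.assoc)
    also have "\<dots> \<le> M * norm (x - y) + (\<beta> + \<gamma>) * ((\<mu>' t / \<mu> t) * norm (x - y))"
    proof -
      have q: "0 \<le> (\<mu>' t / \<mu> t) * norm (x - y)" using mu'_nn[of t] mu_pos[of t] by simp
      show ?thesis using mult_right_mono[OF _ q, of \<gamma> "\<beta> + \<gamma>"] \<beta> by simp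
    qed
    also have "\<dots> = (M + (\<beta> + \<gamma>) * (\<mu>' t / \<mu> t)) * norm (x - y)"
      by (simp add: algebra_simps)
    finally show ?thesis .
  qed
  show "norm (A t *v 0 + f t 0) \<le> M + (\<beta> + \<gamma>) * (\<mu>' t / \<mu> t)" for t
  proof -
    have "norm (f t 0) \<le> \<beta> * (\<mu>' t / \<mu> t)" using f_bdd[of t 0] by (simp add: \<mu>'_def)
    also have "\<dots> \<le> (\<beta> + \<gamma>) * (\<mu>' t / \<mu> t)"
      using \<gamma> mu'_nn[of t] mu_pos[of t] by (intro mult_right_mono) auto
    also have "\<dots> \<le> M + (\<beta> + \<gamma>) * (\<mu>' t / \<mu> t)"
      using M_nn by simp
    finally show ?thesis by simp
  qed
qed

lemma nl_sol_iff: "nl.sol x \<longleftrightarrow> nonlin_solution A f x"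
  by (simp add: nl.sol_def nonlin_solution_def)

end

(* ---- part 6 ---- *)

context setting
begin

definition Y where "Y s \<xi> = (THE x. lin.sol x \<and> x s = \<xi>)"

lemma Y_ex1: "\<exists>!x. lin.sol x \<and> x s = \<xi>"
  using lin.exists[of s \<xi>] lin.unique[of _ _ s] by metis

lemma Y_sol: "lin.sol (Y s \<xi>)" and Y_init: "Y s \<xi> s = \<xi>"
  using theI'[OF Y_ex1[of s \<xi>]] unfolding Y_def by auto

lemma T_apply: "lin.sol x \<Longrightarrow> T t s *v x s = x t"
  using T unfolding evolution_operator_def lin_sol_iff by blast

lemma T_Y: "T t s *v \<xi> = Y s \<xi> t"
  using T_apply[OF Y_sol, of t s s \<xi>] Y_init by simp

lemma T_sol: "lin.sol (\<lambda>t. T t s *v \<xi>)"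
  unfolding T_Y by (rule Y_sol)

lemma T_same_v: "T t t *v \<xi> = \<xi>"
  unfolding T_Y by (rule Y_init)

lemma T_same: "T t t = mat 1"
  unfolding matrix_eq by (simp add: T_same_v)

lemma T_comp_v: "T t s *v (T s r *v \<xi>) = T t r *v \<xi>"
  by (rule T_apply[OF T_sol])

lemma T_comp: "T t s ** T s r = T t r"
  unfolding matrix_eq by (simp add: matrix_vector_mul_assoc[symmetric] T_comp_v)

lemma T_deriv: "((\<lambda>t. T t s *v \<xi>) has_vector_derivative A t *v (T t s *v \<xi>)) (at t)"
  using T_sol[of s \<xi>] unfolding lin.sol_def by blast

lemma T_cont_t: "continuous_on UNIV (\<lambda>t. T t s *v \<xi>)"
  by (rule deriv_cont[OF T_deriv])

lemma zero_lin_sol: "lin.sol (\<lambda>_. 0)"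
  unfolding lin.sol_def by simp

lemma T_bound: "norm (T t s *v \<xi>) \<le> 2 * lin.w s t * norm \<xi>"
  using lin.compare[OF T_sol[of s \<xi>] zero_lin_sol, of t s] by (simp add: T_same_v)

lemma lin_w_cont: "continuous_on UNIV (\<lambda>s. lin.w s t)"
  unfolding lin.w_def by (intro continuous_intros)

lemma T_cont_s:
  assumes v: "continuous_on UNIV v"
  shows "continuous_on UNIV (\<lambda>s. T t s *v v s)"
  unfolding continuous_on_eq_continuous_within
proof
  fix s0 :: real
  define h where "h s = v s - T s s0 *v v s0" for s
  have hc: "continuous_on UNIV h"
    unfolding h_def by (intro continuous_intros v T_cont_t)
  define B where "B s = 2 * lin.w s t * norm (h s)" for s
  have Bc: "continuous_on UNIV B"
    unfolding B_def by (intro continuous_intros lin_w_cont hc)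
  have "(B \<longlongrightarrow> B s0) (at s0)"
    using Bc by (simp add: continuous_on_eq_continuous_at continuous_at)
  moreover have "B s0 = 0" unfolding B_def h_def by (simp add: T_same_v)
  ultimately have B0: "(B \<longlongrightarrow> 0) (at s0)" by simp
  have "norm (T t s *v v s - T t s0 *v v s0) \<le> B s" for s
  proof -
    have "T t s *v v s - T t s0 *v v s0 = T t s *v h s"
      unfolding h_def by (simp add: matrix_vector_mult_diff_distrib T_comp_v)
    then show ?thesis unfolding B_def using T_bound[of t s "h s"] by simp
  qed
  then have "((\<lambda>s. T t s *v v s - T t s0 *v v s0) \<longlongrightarrow> 0) (at s0)"
    by (intro Lim_null_comparison[OF _ B0] always_eventually) simp
  then have "((\<lambda>s. T t s *v v s) \<longlongrightarrow> T t s0 *v v s0) (at s0)"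
    by (rule LIM_zero_cancel)
  then show "continuous (at s0 within UNIV) (\<lambda>s. T t s *v v s)"
    by (simp add: continuous_at)
qed

lemma P_mat_bound:
  assumes "s \<le> t"
  shows "norm (T t s *v (P s *v v)) \<le> K * (\<mu> t / \<mu> s) powr (- \<alpha>) * norm v"
proof -
  have "norm (T t s *v (P s *v v)) = norm ((T t s ** P s) *v v)"
    by (simp add: matrix_vector_mul_assoc)
  also have "\<dots> \<le> opnorm (T t s ** P s) * norm v" by (rule opnorm_bound)
  also have "\<dots> \<le> K * (\<mu> t / \<mu> s) powr (- \<alpha>) * norm v"
    by (rule mult_right_mono[OF dichP[OF assms] norm_ge_zero])
  finally show ?thesis .
qed

lemma Q_mat_bound:
  assumes "t \<le> s"
  shows "norm (T t s *v ((mat 1 - P s) *v v)) \<le> K * (\<mu> s / \<mu> t) powr (- \<alpha>) * norm v"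
proof -
  have "norm (T t s *v ((mat 1 - P s) *v v)) = norm ((T t s ** (mat 1 - P s)) *v v)"
    by (simp add: matrix_vector_mul_assoc)
  also have "\<dots> \<le> opnorm (T t s ** (mat 1 - P s)) * norm v" by (rule opnorm_bound)
  also have "\<dots> \<le> K * (\<mu> s / \<mu> t) powr (- \<alpha>) * norm v"
    by (rule mult_right_mono[OF dichQ[OF assms] norm_ge_zero])
  finally show ?thesis .
qed

lemma P_swap_v: "T t s *v (P s *v v) = P t *v (T t s *v v)"
  by (simp add: matrix_vector_mul_assoc P_comm)

lemma Q_swap_v: "T t s *v ((mat 1 - P s) *v v) = (mat 1 - P t) *v (T t s *v v)"
  by (simp add: matrix_vector_mult_diff_rdistrib matrix_vector_mult_diff_distrib P_swap_v)

end

(* ---- part 7 ---- *)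

lemma powr_div_neg:
  fixes a b c :: real
  assumes "0 < a" "0 < b"
  shows "(a / b) powr (- c) = a powr (- c) * b powr c"
  using assms by (simp add: powr_minus powr_divide field_simps)

lemma int_bot_deriv:
  fixes g :: "real \<Rightarrow> 'a::euclidean_space"
  assumes g: "continuous_on UNIV g" and gi: "\<And>t. g integrable_on {..t}"
  shows "((\<lambda>t. integral {..t} g) has_vector_derivative g t) (at t)"
proof -
  have gab: "g integrable_on {a..b}" for a b
    by (rule integrable_continuous_real) (rule continuous_on_subset[OF g], simp)
  have eq: "integral {..u} g = integral {..0} g + sint 0 u g" for u
  proof (cases "0 \<le> u")
    case True
    have "{..u} = {..0} \<union> {0..u}" using True by auto
    moreover have "negligible ({..0} \<inter> {0..u::real})"
      by (rule negligible_subset[of "{0}"]) auto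
    ultimately have "integral {..u} g = integral {..0} g + integral {0..u} g"
      using integral_Un[OF gi gab] by simp
    then show ?thesis using True by (simp add: sint_def)
  next
    case False
    have "{..0} = {..u} \<union> {u..0}" using False by auto
    moreover have "negligible ({..u} \<inter> {u..0::real})"
      by (rule negligible_subset[of "{u}"]) auto
    ultimately have "integral {..0} g = integral {..u} g + integral {u..0} g"
      using integral_Un[OF gi gab] by simp
    then show ?thesis using False by (simp add: sint_def)
  qed
  have fe: "(\<lambda>u. integral {..u} g) = (\<lambda>u. integral {..0} g + sint 0 u g)" by (rule ext, rule eq)
  have "((\<lambda>t. integral {..0} g + sint 0 t g) has_vector_derivative 0 + g t) (at t)"
    by (intro has_vector_derivative_add has_vector_derivative_const sint_deriv g)
  then show ?thesis unfolding fe by simp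
qed

lemma int_top_deriv:
  fixes g :: "real \<Rightarrow> 'a::euclidean_space"
  assumes g: "continuous_on UNIV g" and gi: "\<And>t. g integrable_on {t..}"
  shows "((\<lambda>t. integral {t..} g) has_vector_derivative - g t) (at t)"
proof -
  have gab: "g integrable_on {a..b}" for a b
    by (rule integrable_continuous_real) (rule continuous_on_subset[OF g], simp)
  have eq: "integral {u..} g = integral {0..} g - sint 0 u g" for u
  proof (cases "0 \<le> u")
    case True
    have "{0..} = {0..u} \<union> {u..}" using True by auto
    moreover have "negligible ({0..u} \<inter> {u::real..})"
      by (rule negligible_subset[of "{u}"]) auto
    ultimately have "integral {0..} g = integral {0..u} g + integral {u..} g"
      using integral_Un[OF gab gi] by simp
    then show ?thesis using True by (simp add: sint_def)
  next
    case False
    have "{u..} = {u..0} \<union> {0..}" using False by auto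
    moreover have "negligible ({u..0} \<inter> {0::real..})"
      by (rule negligible_subset[of "{0}"]) auto
    ultimately have "integral {u..} g = integral {u..0} g + integral {0..} g"
      using integral_Un[OF gab gi] by simp
    then show ?thesis using False by (simp add: sint_def)
  qed
  have fe: "(\<lambda>u. integral {u..} g) = (\<lambda>u. integral {0..} g - sint 0 u g)" by (rule ext, rule eq)
  have "((\<lambda>t. integral {0..} g - sint 0 t g) has_vector_derivative 0 - g t) (at t)"
    by (intro has_vector_derivative_diff has_vector_derivative_const sint_deriv g)
  then show ?thesis unfolding fe by simp
qed

lemma matvec_sum:
  fixes B :: "real^'n^'m"
  shows "B *v v = (\<Sum>i\<in>UNIV. (v $ i) *\<^sub>R (B *v axis i 1))"
  unfolding matrix_vector_mult_basis by (simp add: matrix_mult_sum scalar_mult_eq_scaleR)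

context setting
begin

lemma mat_prod_deriv:
  assumes W: "(W has_vector_derivative W') (at t)"
  shows "((\<lambda>t. T t 0 *v W t) has_vector_derivative A t *v (T t 0 *v W t) + T t 0 *v W') (at t)"
proof -
  have Wi: "((\<lambda>t. W t $ i) has_field_derivative W' $ i) (at t)" for i
    using bounded_linear.has_vector_derivative[OF bounded_linear_vec_nth W, of i]
    by (simp add: has_real_derivative_iff_has_vector_derivative)
  have "((\<lambda>t. \<Sum>i\<in>UNIV. W t $ i *\<^sub>R (T t 0 *v axis i 1)) has_vector_derivative
     (\<Sum>i\<in>UNIV. W t $ i *\<^sub>R (A t *v (T t 0 *v axis i 1)) + W' $ i *\<^sub>R (T t 0 *v axis i 1))) (at t)"
    by (intro has_vector_derivative_sum has_vector_derivative_scaleR Wi T_deriv)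
  moreover have "(\<Sum>i\<in>UNIV. W t $ i *\<^sub>R (A t *v (T t 0 *v axis i 1)) + W' $ i *\<^sub>R (T t 0 *v axis i 1))
      = A t *v (T t 0 *v W t) + T t 0 *v W'"
  proof -
    have "A t *v (T t 0 *v W t) = (A t ** T t 0) *v W t" by (simp add: matrix_vector_mul_assoc)
    also have "\<dots> = (\<Sum>i\<in>UNIV. W t $ i *\<^sub>R (A t *v (T t 0 *v axis i 1)))"
      by (subst matvec_sum) (simp add: matrix_vector_mul_assoc)
    finally show ?thesis by (simp add: sum.distrib matvec_sum[of "T t 0" W'])
  qed
  ultimately show ?thesis
    by (simp add: matvec_sum[of "T _ 0" "W _"])
qed

lemma mu_lim_bot: "(\<mu> \<longlongrightarrow> 0) at_bot" using mu by (simp add: growth_rate_def)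
lemma mu_lim_top: "filterlim \<mu> at_top at_top" using mu by (simp add: growth_rate_def)

lemma rhoP:
  assumes c: "0 \<le> c"
  shows "((\<lambda>s. K * c * \<mu> t powr (- \<alpha>) * (\<mu> s powr \<alpha> * (\<mu>' s / \<mu> s))) has_integral K * c / \<alpha>) {..t}"
proof -
  define \<rho> where "\<rho> s = K * c * \<mu> t powr (- \<alpha>) * \<mu> s powr \<alpha> / \<alpha>" for s
  have "((\<lambda>s. K * c * \<mu> t powr (- \<alpha>) * (\<mu> s powr \<alpha> * (\<mu>' s / \<mu> s))) has_integral \<rho> t) {..t}"
  proof (rule improper_bot)
    fix s
    have "((\<lambda>s. \<mu> s powr \<alpha>) has_real_derivative \<mu> s powr \<alpha> * (0 * ln (\<mu> s) + \<mu>' s * \<alpha> / \<mu> s)) (at s)"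
      by (rule DERIV_powr[OF mu_d mu_pos DERIV_const])
    then have "(\<rho> has_real_derivative K * c * \<mu> t powr (- \<alpha>) * (\<mu> s powr \<alpha> * (0 * ln (\<mu> s) + \<mu>' s * \<alpha> / \<mu> s)) / \<alpha>) (at s)"
      unfolding \<rho>_def by (intro DERIV_cdivide DERIV_cmult)
    then show "(\<rho> has_real_derivative K * c * \<mu> t powr (- \<alpha>) * (\<mu> s powr \<alpha> * (\<mu>' s / \<mu> s))) (at s)"
      using \<alpha>_pos by (simp add: field_simps)
    show "0 \<le> K * c * \<mu> t powr (- \<alpha>) * (\<mu> s powr \<alpha> * (\<mu>' s / \<mu> s))"
      using K_pos c mu'_nn[of s] mu_pos[of s] by simp
  next
    have "((\<lambda>s. \<mu> s powr \<alpha>) \<longlongrightarrow> 0) at_bot"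
      by (rule tendsto_zero_powrI[OF mu_lim_bot tendsto_const]) (use \<alpha>_pos mu_pos less_imp_le in \<open>auto intro!: always_eventually\<close>)
    then have "((\<lambda>s. K * c * \<mu> t powr (- \<alpha>) * \<mu> s powr \<alpha> / \<alpha>) \<longlongrightarrow> K * c * \<mu> t powr (- \<alpha>) * 0 / \<alpha>) at_bot"
      using \<alpha>_pos by (intro tendsto_intros) auto
    then show "(\<rho> \<longlongrightarrow> 0) at_bot" unfolding \<rho>_def by simp
  qed
  moreover have "\<rho> t = K * c / \<alpha>"
    unfolding \<rho>_def using mu_pos[of t] by (simp add: mult.assoc powr_add[symmetric])
  ultimately show ?thesis by simp
qed

lemma rhoQ:
  assumes c: "0 \<le> c"
  shows "((\<lambda>s. K * c * \<mu> t powr \<alpha> * (\<mu> s powr (- \<alpha>) * (\<mu>' s / \<mu> s))) has_integral K * c / \<alpha>) {t..}"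
proof -
  define \<rho> where "\<rho> s = - K * c * \<mu> t powr \<alpha> * \<mu> s powr (- \<alpha>) / \<alpha>" for s
  have "((\<lambda>s. K * c * \<mu> t powr \<alpha> * (\<mu> s powr (- \<alpha>) * (\<mu>' s / \<mu> s))) has_integral - \<rho> t) {t..}"
  proof (rule improper_top)
    fix s
    have "((\<lambda>s. \<mu> s powr (- \<alpha>)) has_real_derivative \<mu> s powr (- \<alpha>) * (0 * ln (\<mu> s) + \<mu>' s * (- \<alpha>) / \<mu> s)) (at s)"
      by (rule DERIV_powr[OF mu_d mu_pos DERIV_const])
    then have "(\<rho> has_real_derivative - K * c * \<mu> t powr \<alpha> * (\<mu> s powr (- \<alpha>) * (0 * ln (\<mu> s) + \<mu>' s * (- \<alpha>) / \<mu> s)) / \<alpha>) (at s)"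
      unfolding \<rho>_def by (intro DERIV_cdivide DERIV_cmult)
    then show "(\<rho> has_real_derivative K * c * \<mu> t powr \<alpha> * (\<mu> s powr (- \<alpha>) * (\<mu>' s / \<mu> s))) (at s)"
      using \<alpha>_pos by (simp add: field_simps)
    show "0 \<le> K * c * \<mu> t powr \<alpha> * (\<mu> s powr (- \<alpha>) * (\<mu>' s / \<mu> s))"
      using K_pos c mu'_nn[of s] mu_pos[of s] by simp
  next
    have "((\<lambda>s. \<mu> s powr (- \<alpha>)) \<longlongrightarrow> 0) at_top"
      by (rule tendsto_neg_powr[OF _ mu_lim_top]) (use \<alpha>_pos in simp)
    then have "((\<lambda>s. - K * c * \<mu> t powr \<alpha> * \<mu> s powr (- \<alpha>) / \<alpha>) \<longlongrightarrow> - K * c * \<mu> t powr \<alpha> * 0 / \<alpha>) at_top"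
      using \<alpha>_pos by (intro tendsto_intros) auto
    then show "(\<rho> \<longlongrightarrow> 0) at_top" unfolding \<rho>_def by simp
  qed
  moreover have "- \<rho> t = K * c / \<alpha>"
    unfolding \<rho>_def using mu_pos[of t] by (simp add: mult.assoc powr_add[symmetric])
  ultimately show ?thesis by simp
qed

end

(* ---- part 8 ---- *)

context setting
begin

definition kP where "kP t F s = T t s *v (P s *v F s)"
definition kQ where "kQ t F s = T t s *v ((mat 1 - P s) *v F s)"
definition Op where "Op F t = integral {..t} (kP t F) - integral {t..} (kQ t F)"

definition bnd where "bnd F c \<longleftrightarrow> continuous_on UNIV F \<and> 0 \<le> c \<and> (\<forall>s. norm (F s) \<le> c * (\<mu>' s / \<mu> s))"

lemma kP_cont: "continuous_on UNIV F \<Longrightarrow> continuous_on UNIV (kP t F)"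
  unfolding kP_def P_swap_v by (rule bounded_linear.continuous_on[OF matrix_vector_mul_bounded_linear T_cont_s])

lemma kQ_cont: "continuous_on UNIV F \<Longrightarrow> continuous_on UNIV (kQ t F)"
  unfolding kQ_def Q_swap_v by (rule bounded_linear.continuous_on[OF matrix_vector_mul_bounded_linear T_cont_s])

lemma kP_bound:
  assumes F: "bnd F c" and st: "s \<le> t"
  shows "norm (kP t F s) \<le> K * c * \<mu> t powr (- \<alpha>) * (\<mu> s powr \<alpha> * (\<mu>' s / \<mu> s))"
proof -
  have Fs: "norm (F s) \<le> c * (\<mu>' s / \<mu> s)" using F by (simp add: bnd_def)
  have "norm (kP t F s) \<le> K * (\<mu> t / \<mu> s) powr (- \<alpha>) * norm (F s)"
    unfolding kP_def by (rule P_mat_bound[OF st])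
  also have "\<dots> \<le> K * (\<mu> t / \<mu> s) powr (- \<alpha>) * (c * (\<mu>' s / \<mu> s))"
    by (rule mult_left_mono[OF Fs]) (use K_pos in simp)
  also have "\<dots> = K * c * \<mu> t powr (- \<alpha>) * (\<mu> s powr \<alpha> * (\<mu>' s / \<mu> s))"
    using mu_pos[of s] mu_pos[of t] by (simp add: powr_div_neg ac_simps)
  finally show ?thesis .
qed

lemma kQ_bound:
  assumes F: "bnd F c" and st: "t \<le> s"
  shows "norm (kQ t F s) \<le> K * c * \<mu> t powr \<alpha> * (\<mu> s powr (- \<alpha>) * (\<mu>' s / \<mu> s))"
proof -
  have Fs: "norm (F s) \<le> c * (\<mu>' s / \<mu> s)" using F by (simp add: bnd_def)
  have "norm (kQ t F s) \<le> K * (\<mu> s / \<mu> t) powr (- \<alpha>) * norm (F s)"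
    unfolding kQ_def by (rule Q_mat_bound[OF st])
  also have "\<dots> \<le> K * (\<mu> s / \<mu> t) powr (- \<alpha>) * (c * (\<mu>' s / \<mu> s))"
    by (rule mult_left_mono[OF Fs]) (use K_pos in simp)
  also have "\<dots> = K * c * \<mu> t powr \<alpha> * (\<mu> s powr (- \<alpha>) * (\<mu>' s / \<mu> s))"
    using mu_pos[of s] mu_pos[of t] by (simp add: powr_div_neg ac_simps)
  finally show ?thesis .
qed

lemma kP_int:
  assumes F: "bnd F c"
  shows "kP t F integrable_on {..t}" "norm (integral {..t} (kP t F)) \<le> K * c / \<alpha>"
proof -
  have c: "0 \<le> c" and Fc: "continuous_on UNIV F" using F by (auto simp: bnd_def)
  have meas: "kP t F \<in> borel_measurable (lebesgue_on {..t})"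
    by (rule continuous_imp_measurable_on_sets_lebesgue[OF continuous_on_subset[OF kP_cont[OF Fc]]]) auto
  show "kP t F integrable_on {..t}"
  proof (rule measurable_bounded_by_integrable_imp_integrable[OF meas has_integral_integrable[OF rhoP[OF c]]])
    fix x assume "x \<in> {..t}"
    then show "norm (kP t F x) \<le> K * c * \<mu> t powr (- \<alpha>) * (\<mu> x powr \<alpha> * (\<mu>' x / \<mu> x))"
      using kP_bound[OF F, of x t] by simp
  qed simp
  show "norm (integral {..t} (kP t F)) \<le> K * c / \<alpha>"
  proof (rule integral_norm_bound_integral'[OF _ meas _ rhoP[OF c]])
    fix x assume "x \<in> {..t}"
    then show "norm (kP t F x) \<le> K * c * \<mu> t powr (- \<alpha>) * (\<mu> x powr \<alpha> * (\<mu>' x / \<mu> x))"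
      using kP_bound[OF F, of x t] by simp
  qed simp
qed

lemma kQ_int:
  assumes F: "bnd F c"
  shows "kQ t F integrable_on {t..}" "norm (integral {t..} (kQ t F)) \<le> K * c / \<alpha>"
proof -
  have c: "0 \<le> c" and Fc: "continuous_on UNIV F" using F by (auto simp: bnd_def)
  have meas: "kQ t F \<in> borel_measurable (lebesgue_on {t..})"
    by (rule continuous_imp_measurable_on_sets_lebesgue[OF continuous_on_subset[OF kQ_cont[OF Fc]]]) auto
  show "kQ t F integrable_on {t..}"
  proof (rule measurable_bounded_by_integrable_imp_integrable[OF meas has_integral_integrable[OF rhoQ[OF c]]])
    fix x assume "x \<in> {t..}"
    then show "norm (kQ t F x) \<le> K * c * \<mu> t powr \<alpha> * (\<mu> x powr (- \<alpha>) * (\<mu>' x / \<mu> x))"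
      using kQ_bound[OF F, of t x] by simp
  qed simp
  show "norm (integral {t..} (kQ t F)) \<le> K * c / \<alpha>"
  proof (rule integral_norm_bound_integral'[OF _ meas _ rhoQ[OF c]])
    fix x assume "x \<in> {t..}"
    then show "norm (kQ t F x) \<le> K * c * \<mu> t powr \<alpha> * (\<mu> x powr (- \<alpha>) * (\<mu>' x / \<mu> x))"
      using kQ_bound[OF F, of t x] by simp
  qed simp
qed

lemma Op_bound:
  assumes F: "bnd F c"
  shows "norm (Op F t) \<le> 2 * K * c / \<alpha>"
proof -
  have "norm (Op F t) \<le> norm (integral {..t} (kP t F)) + norm (integral {t..} (kQ t F))"
    unfolding Op_def by (rule norm_triangle_ineq4)
  also have "\<dots> \<le> K * c / \<alpha> + K * c / \<alpha>"
    by (rule add_mono[OF kP_int(2)[OF F] kQ_int(2)[OF F]])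
  finally show ?thesis by simp
qed

lemma Op_diff:
  assumes F1: "bnd F1 c1" and F2: "bnd F2 c2"
  shows "Op F1 t - Op F2 t = Op (\<lambda>s. F1 s - F2 s) t"
proof -
  have "kP t (\<lambda>s. F1 s - F2 s) = (\<lambda>s. kP t F1 s - kP t F2 s)"
    unfolding kP_def by (simp add: matrix_vector_mult_diff_distrib)
  moreover have "kQ t (\<lambda>s. F1 s - F2 s) = (\<lambda>s. kQ t F1 s - kQ t F2 s)"
    unfolding kQ_def by (simp add: matrix_vector_mult_diff_distrib)
  ultimately show ?thesis
    unfolding Op_def
    using integral_diff[OF kP_int(1)[OF F1] kP_int(1)[OF F2]] integral_diff[OF kQ_int(1)[OF F1] kQ_int(1)[OF F2]]
    by (simp add: algebra_simps)
qed

lemma Op_deriv: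
  assumes F: "bnd F c"
  shows "((\<lambda>t. Op F t) has_vector_derivative A t *v Op F t + F t) (at t)"
proof -
  have Fc: "continuous_on UNIV F" using F by (simp add: bnd_def)
  define g1 where "g1 s = P 0 *v (T 0 s *v F s)" for s
  define g2 where "g2 s = (mat 1 - P 0) *v (T 0 s *v F s)" for s
  have g1c: "continuous_on UNIV g1" unfolding g1_def
    by (rule bounded_linear.continuous_on[OF matrix_vector_mul_bounded_linear T_cont_s[OF Fc]])
  have g2c: "continuous_on UNIV g2" unfolding g2_def
    by (rule bounded_linear.continuous_on[OF matrix_vector_mul_bounded_linear T_cont_s[OF Fc]])
  have kP_eq: "kP t F = (\<lambda>x. T t 0 *v x) \<circ> g1" for t
    unfolding kP_def g1_def o_def
    by (rule ext) (metis T_comp_v P_swap_v)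
  have kQ_eq: "kQ t F = (\<lambda>x. T t 0 *v x) \<circ> g2" for t
    unfolding kQ_def g2_def o_def
    by (rule ext) (metis T_comp_v Q_swap_v)
  have bk: "\<And>(g :: real \<Rightarrow> real^'n) t. (\<lambda>x. T 0 t *v x) \<circ> ((\<lambda>x. T t 0 *v x) \<circ> g) = g"
    by (rule ext) (simp add: T_comp_v T_same_v)
  have g1i: "g1 integrable_on {..t}" for t
    using integrable_linear[OF kP_int(1)[OF F, of t] matrix_vector_mul_bounded_linear[of "T 0 t"]]
    unfolding kP_eq bk .
  have g2i: "g2 integrable_on {t..}" for t
    using integrable_linear[OF kQ_int(1)[OF F, of t] matrix_vector_mul_bounded_linear[of "T 0 t"]]
    unfolding kQ_eq bk .
  define W where "W t = integral {..t} g1 - integral {t..} g2" for t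
  have OpW: "Op F t = T t 0 *v W t" for t
    unfolding Op_def W_def kP_eq kQ_eq
    by (simp add: integral_linear[OF g1i matrix_vector_mul_bounded_linear]
        integral_linear[OF g2i matrix_vector_mul_bounded_linear] matrix_vector_mult_diff_distrib)
  have WD: "(W has_vector_derivative g1 t - - g2 t) (at t)"
    unfolding W_def
    by (rule has_vector_derivative_diff[OF int_bot_deriv[OF g1c g1i] int_top_deriv[OF g2c g2i]])
  have "g1 t - - g2 t = T 0 t *v F t"
    unfolding g1_def g2_def by (simp add: matrix_vector_mult_diff_rdistrib)
  then have "T t 0 *v (g1 t - - g2 t) = F t" by (simp add: T_comp_v T_same_v)
  then have "((\<lambda>t. T t 0 *v W t) has_vector_derivative A t *v (T t 0 *v W t) + F t) (at t)"
    using mat_prod_deriv[OF WD] by simp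
  then show ?thesis unfolding OpW[symmetric] by simp
qed

end

(* ---- part 9 ---- *)

context setting
begin

definition X where "X s \<xi> = (THE x. nl.sol x \<and> x s = \<xi>)"

lemma X_ex1: "\<exists>!x. nl.sol x \<and> x s = \<xi>"
proof (rule ex_ex1I)
  show "\<exists>x. nl.sol x \<and> x s = \<xi>" by (rule nl.exists)
  fix x y assume "nl.sol x \<and> x s = \<xi>" "nl.sol y \<and> y s = \<xi>"
  then show "x = y" using nl.unique[of x y s] by simp
qed

lemma X_sol: "nl.sol (X s \<xi>)" and X_init: "X s \<xi> s = \<xi>"
  using theI'[OF X_ex1[of s \<xi>]] unfolding X_def by auto

lemma X_unique:
  assumes "nl.sol x" shows "X t (x t) = x"
  using nl.unique[OF X_sol[of t "x t"] assms, of t] X_init[of t "x t"] by simp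

lemma f_bnd': "norm (f t x) \<le> \<beta> * (\<mu>' t / \<mu> t)"
  using f_bdd[of t x] by (simp add: \<mu>'_def)

lemma f_lip': "norm (f t x1 - f t x2) \<le> \<gamma> * (\<mu>' t / \<mu> t) * norm (x1 - x2)"
  using f_lip[of t x1 x2] by (simp add: \<mu>'_def)

lemma f_bnd_fun: "continuous_on UNIV x \<Longrightarrow> bnd (\<lambda>s. f s (x s)) \<beta>"
  unfolding bnd_def using cont_comp2[OF f_cont] \<beta> f_bnd' by blast

definition \<theta> where "\<theta> = 2 * K * \<gamma> / \<alpha>"

lemma \<theta>: "0 \<le> \<theta>" "\<theta> < 1"
proof -
  have "0 \<le> K * \<gamma> / \<alpha>" using K_pos \<alpha>_pos \<gamma> by simp
  then show "0 \<le> \<theta>" "\<theta> < 1" using small unfolding \<theta>_def by auto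
qed

definition Gop where "Gop y z = Bcontfun (\<lambda>t. Op (\<lambda>s. f s (y s + apply_bcontfun z s)) t)"

lemma Gop_mem:
  assumes y: "continuous_on UNIV y"
  shows "(\<lambda>t. Op (\<lambda>s. f s (y s + apply_bcontfun z s)) t) \<in> bcontfun"
proof (rule bcontfun_normI)
  have B: "bnd (\<lambda>s. f s (y s + apply_bcontfun z s)) \<beta>"
    by (rule f_bnd_fun) (intro continuous_intros y continuous_on_apply_bcontfun)
  show "continuous_on UNIV (\<lambda>t. Op (\<lambda>s. f s (y s + apply_bcontfun z s)) t)"
    by (rule deriv_cont[OF Op_deriv[OF B]])
  show "norm (Op (\<lambda>s. f s (y s + apply_bcontfun z s)) t) \<le> 2 * K * \<beta> / \<alpha>" for t
    by (rule Op_bound[OF B])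
qed

lemma Gop_app:
  assumes y: "continuous_on UNIV y"
  shows "apply_bcontfun (Gop y z) t = Op (\<lambda>s. f s (y s + apply_bcontfun z s)) t"
  unfolding Gop_def using Gop_mem[OF y] by (simp add: Bcontfun_inverse)

lemma Gop_contr:
  assumes y: "continuous_on UNIV y"
  shows "dist (Gop y z1) (Gop y z2) \<le> \<theta> * dist z1 z2"
proof (rule dist_bound)
  fix t
  have B1: "bnd (\<lambda>s. f s (y s + apply_bcontfun z1 s)) \<beta>"
    by (rule f_bnd_fun) (intro continuous_intros y continuous_on_apply_bcontfun)
  have B2: "bnd (\<lambda>s. f s (y s + apply_bcontfun z2 s)) \<beta>"
    by (rule f_bnd_fun) (intro continuous_intros y continuous_on_apply_bcontfun)
  have c1: "continuous_on UNIV (\<lambda>s. f s (y s + apply_bcontfun z1 s))" using B1 by (simp add: bnd_def)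
  have c2: "continuous_on UNIV (\<lambda>s. f s (y s + apply_bcontfun z2 s))" using B2 by (simp add: bnd_def)
  have BD: "bnd (\<lambda>s. f s (y s + apply_bcontfun z1 s) - f s (y s + apply_bcontfun z2 s)) (\<gamma> * dist z1 z2)"
    unfolding bnd_def
  proof (intro conjI allI)
    show "continuous_on UNIV (\<lambda>s. f s (y s + apply_bcontfun z1 s) - f s (y s + apply_bcontfun z2 s))"
      by (intro continuous_intros c1 c2)
    show "0 \<le> \<gamma> * dist z1 z2" using \<gamma> by simp
    fix s
    have "norm (f s (y s + apply_bcontfun z1 s) - f s (y s + apply_bcontfun z2 s))
        \<le> \<gamma> * (\<mu>' s / \<mu> s) * norm (apply_bcontfun z1 s - apply_bcontfun z2 s)"
      using f_lip'[of s "y s + apply_bcontfun z1 s" "y s + apply_bcontfun z2 s"] by simp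
    also have "\<dots> \<le> \<gamma> * (\<mu>' s / \<mu> s) * dist z1 z2"
      using dist_bounded[of z1 s z2] \<gamma> mu'_nn[of s] mu_pos[of s]
      by (intro mult_left_mono) (auto simp: dist_norm)
    finally show "norm (f s (y s + apply_bcontfun z1 s) - f s (y s + apply_bcontfun z2 s)) \<le> \<gamma> * dist z1 z2 * (\<mu>' s / \<mu> s)"
      by (simp add: ac_simps)
  qed
  have "dist (apply_bcontfun (Gop y z1) t) (apply_bcontfun (Gop y z2) t)
      = norm (Op (\<lambda>s. f s (y s + apply_bcontfun z1 s) - f s (y s + apply_bcontfun z2 s)) t)"
    unfolding Gop_app[OF y] dist_norm Op_diff[OF B1 B2] ..
  also have "\<dots> \<le> 2 * K * (\<gamma> * dist z1 z2) / \<alpha>" by (rule Op_bound[OF BD])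
  also have "\<dots> = \<theta> * dist z1 z2" unfolding \<theta>_def by simp
  finally show "dist (apply_bcontfun (Gop y z1) t) (apply_bcontfun (Gop y z2) t) \<le> \<theta> * dist z1 z2" .
qed

lemma Gop_fix1:
  assumes y: "continuous_on UNIV y" shows "\<exists>!z. Gop y z = z"
  by (rule banach_fix_type[OF \<theta>]) (intro allI, rule Gop_contr[OF y])

definition Zf where "Zf y = (THE z. Gop y z = z)"

lemma Zf_fix: "continuous_on UNIV y \<Longrightarrow> Gop y (Zf y) = Zf y"
  unfolding Zf_def by (rule theI'[OF Gop_fix1])

lemma Zf_eq:
  assumes y: "continuous_on UNIV y"
  shows "apply_bcontfun (Zf y) t = Op (\<lambda>s. f s (y s + apply_bcontfun (Zf y) s)) t"
  using Gop_app[OF y, of "Zf y" t] Zf_fix[OF y] by simp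

lemma Zf_char:
  assumes y: "continuous_on UNIV y" and zc: "continuous_on UNIV z" and zb: "\<And>t. norm (z t) \<le> B"
    and zfix: "\<And>t. z t = Op (\<lambda>s. f s (y s + z s)) t"
  shows "apply_bcontfun (Zf y) = z"
proof -
  have zm: "z \<in> bcontfun" by (rule bcontfun_normI[OF zc zb])
  have "Gop y (Bcontfun z) = Bcontfun z"
    by (rule bcontfun_eqI) (simp add: Gop_app[OF y] Bcontfun_inverse[OF zm] zfix[symmetric])
  then have "Zf y = Bcontfun z"
    using Gop_fix1[OF y] Zf_fix[OF y] by metis
  then show ?thesis using zm by (simp add: Bcontfun_inverse)
qed

end

(* ---- part 10 ---- *)

context setting
begin

definition H where "H t \<xi> = \<xi> - Op (\<lambda>s. f s (X t \<xi> s)) t"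
definition G where "G t \<eta> = \<eta> + apply_bcontfun (Zf (\<lambda>s. T s t *v \<eta>)) t"

lemma nl_cont: "nl.sol x \<Longrightarrow> continuous_on UNIV x"
  unfolding nl.sol_def by (rule deriv_cont) blast

lemma lin_cont: "lin.sol x \<Longrightarrow> continuous_on UNIV x"
  unfolding lin.sol_def by (rule deriv_cont) blast

lemma H_bound: "norm (H t \<xi> - \<xi>) \<le> 2 * K * \<beta> / \<alpha>"
proof -
  have "norm (H t \<xi> - \<xi>) = norm (Op (\<lambda>s. f s (X t \<xi> s)) t)"
    unfolding H_def by (simp add: norm_minus_commute)
  also have "\<dots> \<le> 2 * K * \<beta> / \<alpha>"
    by (rule Op_bound[OF f_bnd_fun[OF nl_cont[OF X_sol]]])
  finally show ?thesis .
qed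

lemma yT_cont: "continuous_on UNIV (\<lambda>s. T s t *v \<eta>)"
  by (rule T_cont_t)

lemma Zf_bnd: "continuous_on UNIV y \<Longrightarrow> bnd (\<lambda>s. f s (y s + apply_bcontfun (Zf y) s)) \<beta>"
  by (rule f_bnd_fun) (intro continuous_intros continuous_on_apply_bcontfun)

lemma G_bound: "norm (G t \<eta> - \<eta>) \<le> 2 * K * \<beta> / \<alpha>"
proof -
  have "norm (G t \<eta> - \<eta>) = norm (apply_bcontfun (Zf (\<lambda>s. T s t *v \<eta>)) t)"
    unfolding G_def by simp
  also have "\<dots> = norm (Op (\<lambda>s. f s (T s t *v \<eta> + apply_bcontfun (Zf (\<lambda>s. T s t *v \<eta>)) s)) t)"
    by (subst Zf_eq[OF yT_cont]) simp
  also have "\<dots> \<le> 2 * K * \<beta> / \<alpha>"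
    by (rule Op_bound[OF Zf_bnd[OF yT_cont]])
  finally show ?thesis .
qed

lemma H_along: "nl.sol x \<Longrightarrow> H t (x t) = x t - Op (\<lambda>s. f s (x s)) t"
  unfolding H_def by (simp add: X_unique)

lemma H_sol:
  assumes x: "nl.sol x"
  shows "lin.sol (\<lambda>t. H t (x t))"
  unfolding lin.sol_def
proof
  fix t
  have xd: "(x has_vector_derivative A t *v x t + f t (x t)) (at t)"
    using x unfolding nl.sol_def by blast
  have od: "((\<lambda>t. Op (\<lambda>s. f s (x s)) t) has_vector_derivative A t *v Op (\<lambda>s. f s (x s)) t + f t (x t)) (at t)"
    by (rule Op_deriv[OF f_bnd_fun[OF nl_cont[OF x]]])
  have "((\<lambda>t. x t - Op (\<lambda>s. f s (x s)) t) has_vector_derivative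
       (A t *v x t + f t (x t)) - (A t *v Op (\<lambda>s. f s (x s)) t + f t (x t))) (at t)"
    by (rule has_vector_derivative_diff[OF xd od])
  then show "((\<lambda>t. H t (x t)) has_vector_derivative A t *v H t (x t)) (at t)"
    by (simp add: H_along[OF x] matrix_vector_mult_diff_distrib)
qed

lemma G_along:
  assumes y: "lin.sol y"
  shows "G t (y t) = y t + apply_bcontfun (Zf y) t"
proof -
  have "(\<lambda>s. T s t *v y t) = y" by (rule ext) (rule T_apply[OF y])
  then show ?thesis unfolding G_def by simp
qed

lemma G_sol:
  assumes y: "lin.sol y"
  shows "nl.sol (\<lambda>t. G t (y t))"
  unfolding nl.sol_def
proof
  fix t
  have yc: "continuous_on UNIV y" by (rule lin_cont[OF y])
  have yd: "(y has_vector_derivative A t *v y t) (at t)"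
    using y unfolding lin.sol_def by blast
  define z where "z = apply_bcontfun (Zf y)"
  have zeq: "z = (\<lambda>t. Op (\<lambda>s. f s (y s + z s)) t)"
    unfolding z_def by (rule ext) (rule Zf_eq[OF yc])
  have "((\<lambda>t. Op (\<lambda>s. f s (y s + z s)) t) has_vector_derivative
        A t *v Op (\<lambda>s. f s (y s + z s)) t + f t (y t + z t)) (at t)"
    by (rule Op_deriv[OF Zf_bnd[OF yc, folded z_def]])
  moreover have zfun: "Op (\<lambda>s. f s (y s + z s)) = z" using zeq by simp
  ultimately have zd: "(z has_vector_derivative A t *v z t + f t (y t + z t)) (at t)"
    by simp
  have "((\<lambda>t. y t + z t) has_vector_derivative A t *v y t + (A t *v z t + f t (y t + z t))) (at t)"
    by (rule has_vector_derivative_add[OF yd zd])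
  then show "((\<lambda>t. G t (y t)) has_vector_derivative A t *v G t (y t) + f t (G t (y t))) (at t)"
    by (simp add: G_along[OF y] z_def[symmetric] matrix_vector_right_distrib add.assoc)
qed

lemma GH: "G t (H t \<xi>) = \<xi>"
proof -
  define x where "x = X t \<xi>"
  have x: "nl.sol x" unfolding x_def by (rule X_sol)
  have xt: "x t = \<xi>" unfolding x_def by (rule X_init)
  define y where "y s = H s (x s)" for s
  have y: "lin.sol y" unfolding y_def by (rule H_sol[OF x])
  have yc: "continuous_on UNIV y" by (rule lin_cont[OF y])
  have xc: "continuous_on UNIV x" by (rule nl_cont[OF x])
  have "apply_bcontfun (Zf y) = (\<lambda>s. x s - y s)"
  proof (rule Zf_char[OF yc])
    show "continuous_on UNIV (\<lambda>s. x s - y s)" by (intro continuous_intros xc yc)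
    show "norm (x s - y s) \<le> 2 * K * \<beta> / \<alpha>" for s
      unfolding y_def using H_bound[of s "x s"] by (simp add: norm_minus_commute)
    show "x s - y s = Op (\<lambda>r. f r (y r + (x r - y r))) s" for s
      unfolding y_def H_along[OF x] by simp
  qed
  then have "G t (y t) = x t" using G_along[OF y, of t] by simp
  then show ?thesis using xt unfolding y_def by simp
qed

lemma HG: "H t (G t \<eta>) = \<eta>"
proof -
  define y where "y s = T s t *v \<eta>" for s
  have y: "lin.sol y" unfolding y_def by (rule T_sol)
  have yt: "y t = \<eta>" unfolding y_def by (rule T_same_v)
  have yc: "continuous_on UNIV y" by (rule lin_cont[OF y])
  define x where "x s = G s (y s)" for s
  have x: "nl.sol x" unfolding x_def by (rule G_sol[OF y])
  have "H t (x t) = x t - Op (\<lambda>s. f s (x s)) t" by (rule H_along[OF x])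
  also have "\<dots> = y t"
    unfolding x_def G_along[OF y] using Zf_eq[OF yc, of t] by simp
  finally show ?thesis unfolding x_def yt .
qed

end

(* ---- part 11 ---- *)

context setting
begin

lemma fs_cont: "continuous_on UNIV (f s)"
proof -
  have "continuous_on UNIV ((\<lambda>(t,x). f t x) \<circ> (\<lambda>x. (s, x)))"
    by (rule continuous_on_compose) (intro continuous_intros, rule continuous_on_subset[OF f_cont], simp)
  then show ?thesis by (simp add: o_def)
qed

lemma H_cont: "continuous_on UNIV (H t)"
proof (rule continuous_on_sequentiallyI)
  fix u :: "nat \<Rightarrow> real^'n" and a assume ua: "u \<longlonglongrightarrow> a"
  define Fk where "Fk k s = f s (X t (u k) s)" for k s
  define F where "F s = f s (X t a s)" for s
  have Fkb: "bnd (Fk k) \<beta>" for k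
    unfolding Fk_def by (rule f_bnd_fun[OF nl_cont[OF X_sol]])
  have Fb: "bnd F \<beta>"
    unfolding F_def by (rule f_bnd_fun[OF nl_cont[OF X_sol]])
  have Xconv: "(\<lambda>k. X t (u k) s) \<longlonglongrightarrow> X t a s" for s
  proof -
    have le0: "norm (X t (u k) s - X t a s) \<le> 2 * nl.w t s * norm (u k - a)" for k
      using nl.compare[OF X_sol[of t "u k"] X_sol[of t a], of s t] by (simp add: X_init)
    have le: "\<forall>k. norm (X t (u k) s - X t a s) \<le> 2 * nl.w t s * norm (u k - a)"
      using le0 by blast
    have lim0: "(\<lambda>k. 2 * nl.w t s * norm (u k - a)) \<longlonglongrightarrow> 0"
    proof -
      have "(\<lambda>k. norm (u k - a)) \<longlonglongrightarrow> 0"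
        using ua by (simp add: LIM_zero tendsto_norm_zero)
      then show ?thesis by (rule tendsto_mult_right_zero)
    qed
    have "(\<lambda>k. X t (u k) s - X t a s) \<longlonglongrightarrow> 0"
      by (rule Lim_null_comparison[OF always_eventually[OF le] lim0])
    then show ?thesis by (rule LIM_zero_cancel)
  qed
  have Fconv: "(\<lambda>k. Fk k s) \<longlonglongrightarrow> F s" for s
    unfolding Fk_def F_def
    by (rule continuous_on_tendsto_compose[OF fs_cont Xconv]) auto
  have kPconv: "(\<lambda>k. kP t (Fk k) s) \<longlonglongrightarrow> kP t F s" for s
    unfolding kP_def
    by (intro bounded_linear.tendsto[OF matrix_vector_mul_bounded_linear] Fconv)
  have kQconv: "(\<lambda>k. kQ t (Fk k) s) \<longlonglongrightarrow> kQ t F s" for s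
    unfolding kQ_def
    by (intro bounded_linear.tendsto[OF matrix_vector_mul_bounded_linear] Fconv)
  have I1: "(\<lambda>k. integral {..t} (kP t (Fk k))) \<longlonglongrightarrow> integral {..t} (kP t F)"
  proof (rule dominated_convergence(2))
    show "kP t (Fk k) integrable_on {..t}" for k by (rule kP_int(1)[OF Fkb])
    show "(\<lambda>s. K * \<beta> * \<mu> t powr (- \<alpha>) * (\<mu> s powr \<alpha> * (\<mu>' s / \<mu> s))) integrable_on {..t}"
      by (rule has_integral_integrable[OF rhoP[OF \<beta>]])
    fix k x assume "x \<in> {..t}"
    then show "norm (kP t (Fk k) x) \<le> K * \<beta> * \<mu> t powr (- \<alpha>) * (\<mu> x powr \<alpha> * (\<mu>' x / \<mu> x))"
      using kP_bound[OF Fkb, of x t] by simp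
  next
    fix x show "(\<lambda>k. kP t (Fk k) x) \<longlonglongrightarrow> kP t F x" by (rule kPconv)
  qed
  have I2: "(\<lambda>k. integral {t..} (kQ t (Fk k))) \<longlonglongrightarrow> integral {t..} (kQ t F)"
  proof (rule dominated_convergence(2))
    show "kQ t (Fk k) integrable_on {t..}" for k by (rule kQ_int(1)[OF Fkb])
    show "(\<lambda>s. K * \<beta> * \<mu> t powr \<alpha> * (\<mu> s powr (- \<alpha>) * (\<mu>' s / \<mu> s))) integrable_on {t..}"
      by (rule has_integral_integrable[OF rhoQ[OF \<beta>]])
    fix k x assume "x \<in> {t..}"
    then show "norm (kQ t (Fk k) x) \<le> K * \<beta> * \<mu> t powr \<alpha> * (\<mu> x powr (- \<alpha>) * (\<mu>' x / \<mu> x))"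
      using kQ_bound[OF Fkb, of t x] by simp
  next
    fix x show "(\<lambda>k. kQ t (Fk k) x) \<longlonglongrightarrow> kQ t F x" by (rule kQconv)
  qed
  have "(\<lambda>k. u k - (integral {..t} (kP t (Fk k)) - integral {t..} (kQ t (Fk k))))
        \<longlonglongrightarrow> a - (integral {..t} (kP t F) - integral {t..} (kQ t F))"
    by (intro tendsto_diff ua I1 I2)
  then show "(\<lambda>k. H t (u k)) \<longlonglongrightarrow> H t a"
    unfolding H_def Op_def Fk_def F_def by simp
qed

lemma homeo: "homeomorphism UNIV UNIV (H t) (G t)"
proof -
  have inj: "inj_on (H t) UNIV"
    by (rule inj_onI) (metis GH)
  have surj: "H t ` UNIV = UNIV"
    by (metis HG surj_def)
  obtain g where g: "homeomorphism UNIV (H t ` UNIV) (H t) g"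
    using invariance_of_domain_homeomorphism[OF open_UNIV H_cont _ inj] by auto
  then have g': "homeomorphism UNIV UNIV (H t) g" by (simp add: surj)
  have "g y = G t y" for y
  proof -
    have "g (H t (G t y)) = G t y" using g' by (simp add: homeomorphism_def)
    then show ?thesis by (simp add: HG)
  qed
  then have "g = G t" by (rule ext)
  then show ?thesis using g' by simp
qed

lemma main:
  "\<exists>H G :: real \<Rightarrow> real ^ 'n \<Rightarrow> real ^ 'n.
           (\<forall>t. homeomorphism UNIV UNIV (H t) (G t))
         \<and> (\<forall>t x. norm (H t x - x) \<le> 2 * K * \<beta> / \<alpha>)
         \<and> (\<forall>t y. norm (G t y - y) \<le> 2 * K * \<beta> / \<alpha>)
         \<and> (\<forall>x. nonlin_solution A f x \<longrightarrow> lin_solution A (\<lambda>t. H t (x t)))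
         \<and> (\<forall>y. lin_solution A y \<longrightarrow> nonlin_solution A f (\<lambda>t. G t (y t)))"
proof (intro exI conjI allI impI)
  show "homeomorphism UNIV UNIV (H t) (G t)" for t by (rule homeo)
  show "norm (H t x - x) \<le> 2 * K * \<beta> / \<alpha>" for t x by (rule H_bound)
  show "norm (G t y - y) \<le> 2 * K * \<beta> / \<alpha>" for t y by (rule G_bound)
  show "lin_solution A (\<lambda>t. H t (x t))" if "nonlin_solution A f x" for x
    using H_sol[of x] that by (simp add: lin_sol_iff nl_sol_iff)
  show "nonlin_solution A f (\<lambda>t. G t (y t))" if "lin_solution A y" for y
    using G_sol[of y] that by (simp add: lin_sol_iff nl_sol_iff)
qed

end

theorem theorem2p1:
  fixes A :: "real \<Rightarrow> real ^ 'n ^ 'n"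
    and T :: "real \<Rightarrow> real \<Rightarrow> real ^ 'n ^ 'n"
    and P :: "real \<Rightarrow> real ^ 'n ^ 'n"
    and \<mu> :: "real \<Rightarrow> real"
    and f :: "real \<Rightarrow> real ^ 'n \<Rightarrow> real ^ 'n"
    and K \<alpha> \<beta> \<gamma> :: real
  assumes A_cont: "continuous_on UNIV A"
    and A_bdd: "bounded (range A)"
    and mu: "growth_rate \<mu>"
    and T: "evolution_operator A T"
    and dich: "algebraic_dichotomy T \<mu> P K \<alpha>"
    and f_cont: "continuous_on UNIV (\<lambda>(t, x). f t x)"
    and \<beta>: "\<beta> \<ge> 0" and \<gamma>: "\<gamma> \<ge> 0"
    and f_bdd: "\<And>t x. norm (f t x) \<le> \<beta> * deriv \<mu> t / \<mu> t"
    and f_lip: "\<And>t x1 x2. norm (f t x1 - f t x2) \<le> \<gamma> * deriv \<mu> t / \<mu> t * norm (x1 - x2)"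
    and small: "6 * K * \<gamma> / \<alpha> < 1"
  shows "\<exists>H G :: real \<Rightarrow> real ^ 'n \<Rightarrow> real ^ 'n.
           (\<forall>t. homeomorphism UNIV UNIV (H t) (G t))
         \<and> (\<forall>t x. norm (H t x - x) \<le> 2 * K * \<beta> / \<alpha>)
         \<and> (\<forall>t y. norm (G t y - y) \<le> 2 * K * \<beta> / \<alpha>)
         \<and> (\<forall>x. nonlin_solution A f x \<longrightarrow> lin_solution A (\<lambda>t. H t (x t)))
         \<and> (\<forall>y. lin_solution A y \<longrightarrow> nonlin_solution A f (\<lambda>t. G t (y t)))"
  by (rule setting.main[OF setting.intro[OF A_cont A_bdd mu T dich f_cont \<beta> \<gamma> f_bdd f_lip small]])

end
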